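(* For every $n\ge1$ and $1\le r\le n$, $$t_{n,r}(\mathbf w)=\binom{n-1}{r-1}P_{n-r}(n;\mathbf w),$$ and $t_{n,0}(\mathbf w)=0$. Equivalently, $E_n(t;\mathbf w):=\sum_{r\ge0}t_{n,r}(\mathbf w)t^r=\sum_{r\ge1}\binom{n-1}{r-1}P_{n-r}(n;\mathbf w)\,t^r$. In particular the total weight of rooted spanning hypertrees is $t_{n,1}(\mathbf w)=P_{n-1}(n;\mathbf w)$, and the total weight of (unrooted) spanning hypertrees is $u_{n,1}(\mathbf w)=P_{n-1}(n;\mathbf w)/n$.
   Context: The complete hypergraph $\overline{\mathcal K}_n$ has vertex set $V=\{1,\dots,n\}$ and as hyperedges all subsets $A\subseteq V$ with $|A|\ge2$. A walk connecting $v_0$ to $v_m$ is a sequence $(v_0,e_1,v_1,\dots,e_m,v_m)$ of vertices and hyperedges with $v_{i-1},v_i\in e_i$; a cycle is such a walk with $m\ge2$, $v_0,\dots,v_{m-1}$ distinct, $v_m=v_0$ and $e_1,\dots,e_m$ distinct. A spanning hyperforest is a set $F$ of hyperedges such that $(V,F)$ contains no cycle; its connected components (equivalence classes of vertices under connection by walks in $F$, isolated vertices included) are hypertrees. A rooted spanning hyperforest is a spanning hyperforest with one distinguished vertex (root) in each component. Given weights $\mathbf w=(w_k)_{k\ge2}$, each hyperforest $F$ has weight $\prod_{A\in F}w_{|A|}$. $t_{n,r}(\mathbf w)$ is the total weight of rooted spanning hyperforests of $\overline{\mathcal K}_n$ with exactly $r$ components, and $u_{n,p}(\mathbf w)$ the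 total weight of (unrooted) spanning hyperforests with exactly $p$ components. The polynomials $P_s(x;\mathbf w)$ are defined by $\exp[x\sum_{k\ge2}w_k y^{k-1}/(k-1)!]=\sum_{s\ge0}P_s(x;\mathbf w)y^s/s!$. *)

theory Defs
  imports "HOL-Computational_Algebra.Formal_Power_Series"
begin

definition hyperedges :: "nat \<Rightarrow> nat set set" where
  "hyperedges n = {A. A \<subseteq> {1..n} \<and> 2 \<le> card A}"

text \<open>A walk (v_0,e_1,v_1,...,e_m,v_m) in F: vs = [v_0..v_m], es = [e_1..e_m].\<close>
definition is_walk :: "nat set set \<Rightarrow> nat list \<Rightarrow> nat set list \<Rightarrow> bool" where
  "is_walk F vs es \<longleftrightarrow> length vs = Suc (length es) \<and>
     (\<forall>i < length es. es ! i \<in> F \<and> vs ! i \<in> es ! i \<and> vs ! Suc i \<in> es ! i)"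

definition is_cycle :: "nat set set \<Rightarrow> nat list \<Rightarrow> nat set list \<Rightarrow> bool" where
  "is_cycle F vs es \<longleftrightarrow> is_walk F vs es \<and> 2 \<le> length es \<and>
     distinct (butlast vs) \<and> last vs = hd vs \<and> distinct es"

definition spanning_hyperforest :: "nat \<Rightarrow> nat set set \<Rightarrow> bool" where
  "spanning_hyperforest n F \<longleftrightarrow> F \<subseteq> hyperedges n \<and> \<not> (\<exists>vs es. is_cycle F vs es)"

definition connected_by :: "nat set set \<Rightarrow> nat \<Rightarrow> nat \<Rightarrow> bool" where
  "connected_by F u v \<longleftrightarrow> (\<exists>vs es. is_walk F vs es \<and> hd vs = u \<and> last vs = v)"

definition components :: "nat \<Rightarrow> nat set set \<Rightarrow> nat set set" where
  "components n F = (\<lambda>u. {v \<in> {1..n}. connected_by F u v}) ` {1..n}"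

definition rooted_spanning_hyperforests :: "nat \<Rightarrow> (nat set set \<times> nat set) set" where
  "rooted_spanning_hyperforests n = {(F, R). spanning_hyperforest n F \<and> R \<subseteq> {1..n} \<and>
      (\<forall>C \<in> components n F. card (R \<inter> C) = 1)}"

definition hf_weight :: "(nat \<Rightarrow> 'a::comm_monoid_mult) \<Rightarrow> nat set set \<Rightarrow> 'a" where
  "hf_weight w F = (\<Prod>A\<in>F. w (card A))"

definition t_rooted :: "nat \<Rightarrow> nat \<Rightarrow> (nat \<Rightarrow> 'a::comm_ring_1) \<Rightarrow> 'a" where
  "t_rooted n r w = (\<Sum>(F, R) \<in> {(F, R) \<in> rooted_spanning_hyperforests n.
       card (components n F) = r}. hf_weight w F)"

definition u_unrooted :: "nat \<Rightarrow> nat \<Rightarrow> (nat \<Rightarrow> 'a::comm_ring_1) \<Rightarrow> 'a" where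
  "u_unrooted n p w = (\<Sum>F \<in> {F. spanning_hyperforest n F \<and> card (components n F) = p}.
       hf_weight w F)"

text \<open>P_s(x;w): exp[x \<Sum>_{k\<ge>2} w_k y^{k-1}/(k-1)!] = \<Sum>_s P_s(x;w) y^s/s!.
  The inner series G(y) = \<Sum>_{j\<ge>1} x w_{j+1} y^j / j! has zero constant term,
  and exp(G) is the composition of the exponential series with G.\<close>
definition P_poly :: "nat \<Rightarrow> 'a::field_char_0 \<Rightarrow> (nat \<Rightarrow> 'a) \<Rightarrow> 'a" where
  "P_poly s x w = fact s *
     (fps_nth (fps_exp 1 oo Abs_fps (\<lambda>j. if j = 0 then 0 else x * w (j + 1) / fact j)) s)"

end

theory Submission
  imports Defs
begin

unbundle fps_syntax

definition G0 :: "(nat \<Rightarrow> 'a::field_char_0) \<Rightarrow> 'a fps" where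
  "G0 w = Abs_fps (\<lambda>j. if j = 0 then 0 else w (j + 1) / fact j)"

definition EE :: "'a::field_char_0 \<Rightarrow> (nat \<Rightarrow> 'a) \<Rightarrow> 'a fps" where
  "EE x w = fps_exp 1 oo (fps_const x * G0 w)"

lemma inner_eq: "Abs_fps (\<lambda>j. if j = 0 then 0 else x * w (j + 1) / fact j) = fps_const x * G0 w"
  by (rule fps_ext) (simp add: G0_def)

lemma P_poly_EE: "P_poly s x w = fact s * EE x w $ s"
  unfolding P_poly_def EE_def inner_eq ..

lemma EE_0: "EE x w $ 0 = 1"
  unfolding EE_def by simp

lemma EE_deriv: "fps_deriv (EE x w) = fps_const x * fps_deriv (G0 w) * EE x w"
proof -
  have b0: "(fps_const x * G0 w) $ 0 = 0" by (simp add: G0_def)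
  have "fps_deriv (EE x w) = (fps_deriv (fps_exp 1) oo (fps_const x * G0 w)) * fps_deriv (fps_const x * G0 w)"
    unfolding EE_def by (rule fps_compose_deriv[OF b0])
  also have "fps_deriv (fps_exp (1::'a)) = fps_exp 1" by simp
  also have "fps_deriv (fps_const x * G0 w) = fps_const x * fps_deriv (G0 w)"
    by (simp add: fps_deriv_mult_const_left)
  finally show ?thesis unfolding EE_def by (simp only: mult_ac)
qed

lemma ode_unique:
  fixes f g h :: "'a::field_char_0 fps"
  assumes "fps_deriv f = h * f" "fps_deriv g = h * g" "f $ 0 = g $ 0"
  shows "f = g"
proof (rule fps_ext)
  fix n show "f $ n = g $ n"
  proof (induction n rule: less_induct)
    case (less n)
    show ?case
    proof (cases n)
      case 0 then show ?thesis using assms(3) by simp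
    next
      case (Suc k)
      have "of_nat (k+1) * f $ (k+1) = (h * f) $ k" using assms(1) fps_deriv_nth[of f k] by simp
      also have "\<dots> = (\<Sum>i=0..k. h$i * f$(k - i))" by (simp add: fps_mult_nth)
      also have "\<dots> = (\<Sum>i=0..k. h$i * g$(k - i))"
        by (rule sum.cong) (use less Suc in auto)
      also have "\<dots> = (h * g) $ k" by (simp add: fps_mult_nth)
      also have "\<dots> = of_nat (k+1) * g $ (k+1)" using assms(2) fps_deriv_nth[of g k] by simp
      finally show ?thesis using Suc by (simp del: of_nat_Suc)
    qed
  qed
qed

lemma EE_add: "EE x w * EE y w = EE (x + y) w"
proof (rule ode_unique[where h = "fps_const (x+y) * fps_deriv (G0 w)"])
  show "fps_deriv (EE x w * EE y w) = fps_const (x + y) * fps_deriv (G0 w) * (EE x w * EE y w)"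
  proof -
    have "fps_deriv (EE x w * EE y w) = fps_deriv (EE x w) * EE y w + EE x w * fps_deriv (EE y w)"
      by simp
    also have "\<dots> = (fps_const x + fps_const y) * fps_deriv (G0 w) * (EE x w * EE y w)"
      unfolding EE_deriv by (simp only: distrib_right distrib_left mult_ac)
    finally show ?thesis by (simp only: fps_const_add)
  qed
  show "fps_deriv (EE (x + y) w) = fps_const (x + y) * fps_deriv (G0 w) * EE (x + y) w"
    by (rule EE_deriv)
  show "(EE x w * EE y w) $ 0 = EE (x + y) w $ 0" by (simp add: EE_0)
qed

lemma EE_nth: "EE x w $ k = P_poly k x w / fact k"
  by (simp add: P_poly_EE)

lemma P_binom:
  "P_poly s (x + y) w = (\<Sum>k=0..s. of_nat (s choose k) * P_poly k x w * P_poly (s - k) y w)"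
proof -
  have "P_poly s (x + y) w = fact s * (EE x w * EE y w) $ s"
    by (simp add: P_poly_EE EE_add)
  also have "\<dots> = (\<Sum>k=0..s. fact s * (EE x w $ k * EE y w $ (s - k)))"
    by (simp add: fps_mult_nth sum_distrib_left)
  also have "\<dots> = (\<Sum>k=0..s. of_nat (s choose k) * P_poly k x w * P_poly (s - k) y w)"
  proof (rule sum.cong)
    fix k assume "k \<in> {0..s}"
    then have ks: "k \<le> s" by simp
    show "fact s * (EE x w $ k * EE y w $ (s - k)) = of_nat (s choose k) * P_poly k x w * P_poly (s - k) y w"
      using ks by (simp add: EE_nth binomial_fact field_simps)
  qed simp
  finally show ?thesis .
qed

lemma G0_deriv_nth: "fps_deriv (G0 w) $ j = w (j + 2) / fact j"
proof -
  have "fps_deriv (G0 w) $ j = of_nat (j+1) * (w (j + 2) / fact (j+1))"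
    by (simp add: G0_def)
  also have "\<dots> = w (j + 2) / fact j"
    by (simp add: field_simps del: of_nat_Suc)
  finally show ?thesis .
qed

lemma P_rec:
  "P_poly (Suc m) x w = x * (\<Sum>j=0..m. of_nat (m choose j) * w (j + 2) * P_poly (m - j) x w)"
proof -
  have "of_nat (m+1) * EE x w $ (m+1) = (fps_const x * fps_deriv (G0 w) * EE x w) $ m"
    using fps_deriv_nth[of "EE x w" m] by (simp only: EE_deriv)
  also have "\<dots> = x * (\<Sum>j=0..m. fps_deriv (G0 w) $ j * EE x w $ (m - j))"
    unfolding mult.assoc fps_mult_left_const_nth by (simp only: fps_mult_nth)
  finally have eq: "of_nat (m+1) * EE x w $ (m+1) = x * (\<Sum>j=0..m. w (j + 2) / fact j * (P_poly (m - j) x w / fact (m - j)))"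
    by (simp del: fps_deriv_nth add: G0_deriv_nth EE_nth)
  have "P_poly (Suc m) x w = fact m * (of_nat (m+1) * EE x w $ (m+1))"
    by (simp add: P_poly_EE)
  also have "\<dots> = x * (\<Sum>j=0..m. fact m * (w (j + 2) / fact j * (P_poly (m - j) x w / fact (m - j))))"
    unfolding eq by (simp add: sum_distrib_left mult_ac)
  also have "\<dots> = x * (\<Sum>j=0..m. of_nat (m choose j) * w (j + 2) * P_poly (m - j) x w)"
  proof (intro arg_cong[where f="\<lambda>t. x * t"] sum.cong refl)
    fix j assume "j \<in> {0..m}"
    then have "j \<le> m" by simp
    then show "fact m * (w (j + 2) / fact j * (P_poly (m - j) x w / fact (m - j))) =
        of_nat (m choose j) * w (j + 2) * P_poly (m - j) x w"
      by (simp add: binomial_fact field_simps)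
  qed
  finally show ?thesis .
qed

lemma EE_kweight:
  "(x + y) * (\<Sum>k=0..n. of_nat k * (EE x w $ k * EE y w $ (n - k))) = of_nat n * x * EE (x + y) w $ n"
proof (cases n)
  case 0 then show ?thesis by simp
next
  case (Suc m)
  have key: "fps_const (x + y) * (fps_deriv (EE x w) * EE y w) = fps_const x * fps_deriv (EE (x + y) w)"
  proof -
    have "fps_deriv (EE (x + y) w) = fps_const (x + y) * fps_deriv (G0 w) * (EE x w * EE y w)"
      by (simp only: EE_deriv EE_add)
    then show ?thesis unfolding EE_deriv by (simp only: mult_ac)
  qed
  have "(fps_const (x + y) * (fps_deriv (EE x w) * EE y w)) $ m =
        (x + y) * (\<Sum>i=0..m. of_nat (Suc i) * EE x w $ Suc i * EE y w $ (m - i))"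
    by (subst fps_mult_left_const_nth) (simp only: fps_mult_nth fps_deriv_nth Suc_eq_plus1)
  also have "(\<Sum>i=0..m. of_nat (Suc i) * EE x w $ Suc i * EE y w $ (m - i)) =
       (\<Sum>k=0..n. of_nat k * (EE x w $ k * EE y w $ (n - k)))"
    unfolding Suc sum.atLeast0_atMost_Suc_shift by (simp add: mult_ac)
  finally have l: "(fps_const (x + y) * (fps_deriv (EE x w) * EE y w)) $ m = (x + y) * (\<Sum>k=0..n. of_nat k * (EE x w $ k * EE y w $ (n - k)))" .
  have r: "(fps_const x * fps_deriv (EE (x + y) w)) $ m = of_nat n * x * EE (x + y) w $ n"
    using Suc by (simp add: mult_ac)
  show ?thesis using key l r by metis
qed

lemma P_kweight:
  "(x + y) * (\<Sum>k=0..n. of_nat (n choose k) * of_nat k * P_poly k x w * P_poly (n - k) y w)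
     = of_nat n * x * P_poly n (x + y) w"
proof -
  have "(\<Sum>k=0..n. of_nat (n choose k) * of_nat k * P_poly k x w * P_poly (n - k) y w)
      = fact n * (\<Sum>k=0..n. of_nat k * (EE x w $ k * EE y w $ (n - k)))"
    unfolding sum_distrib_left
  proof (rule sum.cong)
    fix k assume "k \<in> {0..n}"
    then have "k \<le> n" by simp
    then show "of_nat (n choose k) * of_nat k * P_poly k x w * P_poly (n - k) y w =
          fact n * (of_nat k * (EE x w $ k * EE y w $ (n - k)))"
      by (simp add: binomial_fact EE_nth field_simps)
  qed simp
  then have "(x + y) * (\<Sum>k=0..n. of_nat (n choose k) * of_nat k * P_poly k x w * P_poly (n - k) y w)
      = fact n * (of_nat n * x * EE (x + y) w $ n)"
    using EE_kweight[where x=x and y=y and n=n and w=w] by (simp add: mult_ac)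
  also have "\<dots> = of_nat n * x * P_poly n (x + y) w"
    by (simp add: P_poly_EE mult_ac)
  finally show ?thesis .
qed

lemma P_0: "P_poly 0 x w = 1"
  by (simp add: P_poly_EE EE_0)

lemma sum_reflect: "(\<Sum>k=0..s. f (s - k)) = (\<Sum>k=0..(s::nat). (f k :: 'b::comm_monoid_add))"
proof -
  have "(\<Sum>k=0..s. f (s - k)) = (\<Sum>k<Suc s. f (Suc s - Suc k))"
    by (simp add: atLeast0AtMost lessThan_Suc_atMost)
  also have "\<dots> = (\<Sum>k<Suc s. f k)" by (rule sum.nat_diff_reindex)
  also have "\<dots> = (\<Sum>k=0..s. f k)" by (simp add: atLeast0AtMost lessThan_Suc_atMost)
  finally show ?thesis .
qed

definition closedF :: "(nat \<Rightarrow> 'a::field_char_0) \<Rightarrow> nat \<Rightarrow> nat \<Rightarrow> 'a" where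
  "closedF w n r = (if n = 0 then 1 else of_nat r / of_nat n * P_poly (n - r) (of_nat n) w)"

lemma closedF_rec:
  assumes r: "1 \<le> r"
  shows "closedF w (r + s) r = (\<Sum>m=0..s. of_nat (s choose m) * closedF w s m * P_poly m (of_nat r) w)"
proof (cases "s = 0")
  case True
  then show ?thesis using r by (simp add: closedF_def P_0)
next
  case False
  let ?P = "\<lambda>k x. P_poly k x w"
  let ?x = "of_nat s :: 'a" and ?y = "of_nat r :: 'a"
  have s0: "?x \<noteq> 0" using False by simp
  have xy0: "?x + ?y \<noteq> 0"
  proof -
    have "?x + ?y = of_nat (s + r)" by simp
    moreover have "s + r \<noteq> 0" using r by simp
    ultimately show ?thesis by (metis of_nat_eq_0_iff)
  qed
  have b: "?P s (?x + ?y) = (\<Sum>k=0..s. of_nat (s choose k) * ?P k ?x * ?P (s - k) ?y)"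
    by (rule P_binom)
  have kw: "(?x + ?y) * (\<Sum>k=0..s. of_nat (s choose k) * of_nat k * ?P k ?x * ?P (s - k) ?y)
     = ?x * ?x * ?P s (?x + ?y)"
    using P_kweight[where x="?x" and y="?y" and n=s and w=w] by simp
  have "(\<Sum>m=0..s. of_nat (s choose m) * closedF w s m * ?P m ?y)
      = (\<Sum>k=0..s. of_nat (s choose (s - k)) * closedF w s (s - k) * ?P (s - k) ?y)"
    by (rule sum_reflect[symmetric])
  also have "\<dots> = (\<Sum>k=0..s. of_nat (s choose k) * ?P k ?x * ?P (s - k) ?y
        - (of_nat (s choose k) * of_nat k * ?P k ?x * ?P (s - k) ?y) / ?x)"
  proof (rule sum.cong[OF refl])
    fix k assume "k \<in> {0..s}"
    then have ks: "k \<le> s" by simp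
    then have "of_nat (s - k) = ?x - of_nat k" by (simp add: of_nat_diff)
    then show "of_nat (s choose (s - k)) * closedF w s (s - k) * ?P (s - k) ?y =
       of_nat (s choose k) * ?P k ?x * ?P (s - k) ?y - (of_nat (s choose k) * of_nat k * ?P k ?x * ?P (s - k) ?y) / ?x"
      using ks False s0 by (simp add: closedF_def binomial_symmetric[OF ks, symmetric] field_simps)
  qed
  also have "\<dots> = ?P s (?x + ?y) - (\<Sum>k=0..s. of_nat (s choose k) * of_nat k * ?P k ?x * ?P (s - k) ?y) / ?x"
    by (simp add: sum_subtractf sum_divide_distrib b)
  also have "(\<Sum>k=0..s. of_nat (s choose k) * of_nat k * ?P k ?x * ?P (s - k) ?y) = ?x * ?x * ?P s (?x + ?y) / (?x + ?y)"
    using kw xy0 by (simp add: field_simps)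
  also have "?P s (?x + ?y) - ?x * ?x * ?P s (?x + ?y) / (?x + ?y) / ?x = ?y / (?x + ?y) * ?P s (?x + ?y)"
  proof -
    have "?x * ?x * ?P s (?x + ?y) / (?x + ?y) / ?x = ?x * ?P s (?x + ?y) / (?x + ?y)"
      using s0 by simp
    moreover have "?P s (?x + ?y) - ?x * ?P s (?x + ?y) / (?x + ?y) = ?y / (?x + ?y) * ?P s (?x + ?y)"
      using xy0 by (simp add: field_simps)
    ultimately show ?thesis by simp
  qed
  also have "\<dots> = closedF w (r + s) r"
    using r by (simp add: closedF_def add.commute)
  finally show ?thesis by simp
qed


inductive conn :: "nat set set \<Rightarrow> nat \<Rightarrow> nat \<Rightarrow> bool" for F where
  crefl: "conn F u u"
| cstep: "A \<in> F \<Longrightarrow> u \<in> A \<Longrightarrow> x \<in> A \<Longrightarrow> conn F x v \<Longrightarrow> conn F u v"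

lemma conn_trans: "conn F u v \<Longrightarrow> conn F v z \<Longrightarrow> conn F u z"
  by (induction rule: conn.induct) (auto intro: conn.cstep)

lemma conn_edge: "A \<in> F \<Longrightarrow> u \<in> A \<Longrightarrow> x \<in> A \<Longrightarrow> conn F u x"
  by (rule conn.cstep[OF _ _ _ conn.crefl])

lemma conn_sym: "conn F u v \<Longrightarrow> conn F v u"
proof (induction rule: conn.induct)
  case (crefl u) then show ?case by (rule conn.crefl)
next
  case (cstep A u x v)
  then show ?case using conn_trans conn_edge by metis
qed

lemma conn_mono: "conn F u v \<Longrightarrow> F \<subseteq> G \<Longrightarrow> conn G u v"
  by (induction rule: conn.induct) (auto intro: conn.intros)

lemma conn_inv:
  assumes "conn F u v" "\<And>A x y. A \<in> F \<Longrightarrow> x \<in> A \<Longrightarrow> y \<in> A \<Longrightarrow> f x = f y"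
  shows "f u = f v"
  using assms by (induction rule: conn.induct) metis+

lemma conn_stay:
  assumes "conn F u v" "u \<in> V" "\<And>A. A \<in> F \<Longrightarrow> A \<subseteq> V"
  shows "v \<in> V"
  using assms by (induction rule: conn.induct) auto

lemma is_walk_Nil: "is_walk F vs [] \<longleftrightarrow> length vs = 1"
  by (simp add: is_walk_def)

lemma is_walk_Cons:
  "is_walk F (u # vs) (A # es) \<longleftrightarrow> A \<in> F \<and> u \<in> A \<and> vs \<noteq> [] \<and> hd vs \<in> A \<and> is_walk F vs es"
proof
  assume h: "is_walk F (u # vs) (A # es)"
  then have len: "length vs = Suc (length es)" by (simp add: is_walk_def)
  then have ne: "vs \<noteq> []" by auto
  have h0: "A \<in> F \<and> u \<in> A \<and> vs ! 0 \<in> A"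
    using h unfolding is_walk_def by (metis length_Cons nth_Cons_0 nth_Cons_Suc zero_less_Suc)
  have "\<forall>i < length es. es ! i \<in> F \<and> vs ! i \<in> es ! i \<and> vs ! Suc i \<in> es ! i"
  proof (intro allI impI)
    fix i assume "i < length es"
    then have "Suc i < length (A # es)" by simp
    with h show "es ! i \<in> F \<and> vs ! i \<in> es ! i \<and> vs ! Suc i \<in> es ! i"
      unfolding is_walk_def by (metis nth_Cons_Suc)
  qed
  then show "A \<in> F \<and> u \<in> A \<and> vs \<noteq> [] \<and> hd vs \<in> A \<and> is_walk F vs es"
    using h0 ne len by (simp add: is_walk_def hd_conv_nth)
next
  assume h: "A \<in> F \<and> u \<in> A \<and> vs \<noteq> [] \<and> hd vs \<in> A \<and> is_walk F vs es"
  have "length (u # vs) = Suc (length (A # es))" using h by (simp add: is_walk_def)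
  moreover have "\<forall>i < length (A # es). (A # es) ! i \<in> F \<and> (u # vs) ! i \<in> (A # es) ! i \<and> (u # vs) ! Suc i \<in> (A # es) ! i"
  proof (intro allI impI)
    fix i assume i: "i < length (A # es)"
    show "(A # es) ! i \<in> F \<and> (u # vs) ! i \<in> (A # es) ! i \<and> (u # vs) ! Suc i \<in> (A # es) ! i"
    proof (cases i)
      case 0 then show ?thesis using h by (auto simp: hd_conv_nth[symmetric])
    next
      case (Suc j)
      then have "j < length es" using i by simp
      then show ?thesis using h Suc by (simp add: is_walk_def)
    qed
  qed
  ultimately show "is_walk F (u # vs) (A # es)" unfolding is_walk_def by blast
qed

lemma walk_conn:
  "is_walk F vs es \<Longrightarrow> conn F (hd vs) (last vs)"
proof (induction es arbitrary: vs)
  case Nil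
  then obtain u where "vs = [u]" by (auto simp: is_walk_Nil length_Suc_conv)
  then show ?case by (simp add: conn.crefl)
next
  case (Cons A es)
  then obtain u vs' where vs: "vs = u # vs'"
    by (cases vs) (auto simp: is_walk_def)
  with Cons.prems have h: "A \<in> F" "u \<in> A" "vs' \<noteq> []" "hd vs' \<in> A" "is_walk F vs' es"
    by (auto simp: is_walk_Cons)
  then have "conn F (hd vs') (last vs')" using Cons.IH by blast
  then show ?case using h vs by (auto intro: conn.cstep)
qed

lemma conn_walk:
  "conn F u v \<Longrightarrow> \<exists>vs es. is_walk F vs es \<and> hd vs = u \<and> last vs = v"
proof (induction rule: conn.induct)
  case (crefl u)
  then show ?case by (intro exI[of _ "[u]"] exI[of _ "[]"]) (simp add: is_walk_Nil)
next
  case (cstep A u x v)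
  then obtain vs es where h: "is_walk F vs es" "hd vs = x" "last vs = v" by blast
  then have ne: "vs \<noteq> []" by (auto simp: is_walk_def)
  show ?case
    by (rule exI[of _ "u # vs"], rule exI[of _ "A # es"]) (use h ne cstep in \<open>simp add: is_walk_Cons\<close>)
qed

lemma connected_by_conn: "connected_by F u v \<longleftrightarrow> conn F u v"
  unfolding connected_by_def using walk_conn conn_walk by metis

lemma walk_mono: "is_walk F vs es \<Longrightarrow> F \<subseteq> G \<Longrightarrow> is_walk G vs es"
  unfolding is_walk_def by blast

lemma walk_drop:
  "is_walk F vs es \<Longrightarrow> i < length vs \<Longrightarrow> is_walk F (drop i vs) (drop i es)"
  unfolding is_walk_def by auto

lemma distinct_nth_notin_drop:
  assumes "distinct xs" "j < length xs"
  shows "xs ! j \<notin> set (drop (Suc j) xs)"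
proof -
  have "xs = take (Suc j) xs @ drop (Suc j) xs" by simp
  then have "set (take (Suc j) xs) \<inter> set (drop (Suc j) xs) = {}"
    using assms(1) by (metis distinct_append)
  moreover have "xs ! j \<in> set (take (Suc j) xs)"
    using assms(2) by (simp add: in_set_conv_nth) (metis lessI nth_take)
  ultimately show ?thesis by blast
qed

lemma conn_path:
  "conn G u v \<Longrightarrow> \<exists>vs es. is_walk G vs es \<and> hd vs = u \<and> last vs = v \<and> distinct vs \<and> distinct es"
proof (induction rule: conn.induct)
  case (crefl u)
  then show ?case by (intro exI[of _ "[u]"] exI[of _ "[]"]) (simp add: is_walk_Nil)
next
  case (cstep A u x v)
  then obtain vs es where h: "is_walk G vs es" "hd vs = x" "last vs = v" "distinct vs" "distinct es" by blast
  then have ne: "vs \<noteq> []" and len: "length vs = Suc (length es)" by (auto simp: is_walk_def)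
  show ?case
  proof (cases "u \<in> set vs")
    case True
    then obtain i where i: "i < length vs" "vs ! i = u" by (auto simp: in_set_conv_nth)
    show ?thesis
      by (rule exI[of _ "drop i vs"], rule exI[of _ "drop i es"])
        (use h i walk_drop[OF h(1) i(1)] in \<open>auto simp: hd_drop_conv_nth last_drop\<close>)
  next
    case uv: False
    show ?thesis
    proof (cases "A \<in> set es")
      case True
      then obtain j where j: "j < length es" "es ! j = A" by (auto simp: in_set_conv_nth)
      have w: "is_walk G (drop (Suc j) vs) (drop (Suc j) es)"
        using walk_drop[OF h(1)] j len by simp
      have hdd: "hd (drop (Suc j) vs) = vs ! Suc j" using j len by (simp add: hd_drop_conv_nth)
      have "vs ! Suc j \<in> A" using h(1) j unfolding is_walk_def by blast
      moreover have "drop (Suc j) vs \<noteq> []" using j len by simp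
      moreover have "A \<notin> set (drop (Suc j) es)" using distinct_nth_notin_drop[OF h(5) j(1)] j by simp
      moreover have "u \<notin> set (drop (Suc j) vs)" using uv by (meson in_set_dropD)
      moreover have "last (drop (Suc j) vs) = v" using h j len by (simp add: last_drop)
      ultimately show ?thesis
        using w hdd cstep h
        by (intro exI[of _ "u # drop (Suc j) vs"] exI[of _ "A # drop (Suc j) es"])
          (simp add: is_walk_Cons)
    next
      case False
      then show ?thesis using uv h ne cstep
        by (intro exI[of _ "u # vs"] exI[of _ "A # es"]) (simp add: is_walk_Cons)
    qed
  qed
qed

definition acyc :: "nat set set \<Rightarrow> bool" where
  "acyc F \<longleftrightarrow> \<not> (\<exists>vs es. is_cycle F vs es)"

lemma last_notin_butlast: "distinct xs \<Longrightarrow> xs \<noteq> [] \<Longrightarrow> last xs \<notin> set (butlast xs)"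
  by (metis append_butlast_last_id distinct_append disjoint_iff list.set_intros(1))

lemma acyc_sep:
  assumes "acyc F" "A \<in> F" "a \<in> A" "b \<in> A" "a \<noteq> b"
  shows "\<not> conn (F - {A}) a b"
proof
  assume "conn (F - {A}) a b"
  then obtain vs es where h: "is_walk (F - {A}) vs es" "hd vs = a" "last vs = b" "distinct vs" "distinct es"
    using conn_path by blast
  have ne: "vs \<noteq> []" using h by (auto simp: is_walk_def)
  have esne: "es \<noteq> []"
  proof
    assume "es = []"
    then have "length vs = 1" using h(1) by (simp add: is_walk_Nil)
    then have "hd vs = last vs" by (cases vs) auto
    then show False using h assms(5) by simp
  qed
  have "is_cycle F (b # vs) (A # es)"
    unfolding is_cycle_def
  proof (intro conjI)
    show "is_walk F (b # vs) (A # es)"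
      using h assms ne walk_mono[OF h(1), of F] by (auto simp: is_walk_Cons)
    show "2 \<le> length (A # es)" using esne by (cases es) auto
    show "distinct (butlast (b # vs))"
      using h ne last_notin_butlast[OF h(4) ne] by (simp add: distinct_butlast)
    show "last (b # vs) = hd (b # vs)" using h ne by simp
    show "distinct (A # es)"
      using h(1,5) unfolding is_walk_def by (auto simp: in_set_conv_nth)
  qed
  then show False using assms(1) unfolding acyc_def by blast
qed

lemma walk_chain:
  assumes "is_walk F vs es" "\<And>i. i < length es \<Longrightarrow> j \<le> i \<Longrightarrow> es ! i \<in> G"
    "j \<le> k" "k \<le> length es"
  shows "conn G (vs ! j) (vs ! k)"
  using assms(3,4)
proof (induction k)
  case 0 then show ?case by (simp add: conn.crefl)
next
  case (Suc k)
  show ?case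
  proof (cases "j = Suc k")
    case True then show ?thesis by (simp add: conn.crefl)
  next
    case False
    then have jk: "j \<le> k" "k < length es" using Suc by auto
    then have "conn G (vs ! j) (vs ! k)" using Suc by simp
    moreover have "es ! k \<in> G" using assms(2) jk by simp
    moreover have "vs ! k \<in> es ! k" "vs ! Suc k \<in> es ! k" using assms(1) jk unfolding is_walk_def by auto
    ultimately show ?thesis using conn_trans conn_edge by metis
  qed
qed

lemma acyc_crit:
  assumes "\<And>A a b. A \<in> F \<Longrightarrow> a \<in> A \<Longrightarrow> b \<in> A \<Longrightarrow> a \<noteq> b \<Longrightarrow> \<not> conn (F - {A}) a b"
  shows "acyc F"
  unfolding acyc_def
proof
  assume "\<exists>vs es. is_cycle F vs es"
  then obtain vs es where c: "is_walk F vs es" "2 \<le> length es" "distinct (butlast vs)"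
      "last vs = hd vs" "distinct es"
    unfolding is_cycle_def by blast
  let ?m = "length es"
  have len: "length vs = Suc ?m" using c(1) by (simp add: is_walk_def)
  have p: "0 < ?m" using c(2) by linarith
  have A: "es ! 0 \<in> F" "vs ! 0 \<in> es ! 0" "vs ! 1 \<in> es ! 0" using c(1) p unfolding is_walk_def One_nat_def by blast+
  have "vs ! 0 \<noteq> vs ! 1"
  proof -
    have ii: "0 < length (butlast vs)" "1 < length (butlast vs)" using c(2) len by auto
    have "butlast vs ! 0 = vs ! 0" "butlast vs ! 1 = vs ! 1" using nth_butlast[OF ii(1)] nth_butlast[OF ii(2)] by auto
    moreover have "length (butlast vs) = ?m" using len by simp
    ultimately show ?thesis using c(3) ii nth_eq_iff_index_eq[OF c(3) ii(1) ii(2)] by auto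
  qed
  moreover have "conn (F - {es ! 0}) (vs ! 1) (vs ! ?m)"
  proof (rule walk_chain[OF c(1)])
    fix i assume "i < ?m" "1 \<le> i"
    moreover have "0 < ?m" using c(2) by linarith
    ultimately have "es ! i \<noteq> es ! 0" using nth_eq_iff_index_eq[OF c(5), of i 0] by auto
    moreover have "es ! i \<in> F" using c(1) \<open>i < ?m\<close> unfolding is_walk_def by blast
    ultimately show "es ! i \<in> F - {es ! 0}" by blast
  qed (use c(2) in auto)
  moreover have "vs ! ?m = vs ! 0" using c(4) len
    by (metis diff_Suc_1 hd_conv_nth last_conv_nth list.size(3) nat.distinct(1))
  ultimately show False using assms[OF A] conn_sym by metis
qed

lemma acyc_iff:
  "acyc F \<longleftrightarrow> (\<forall>A\<in>F. \<forall>a\<in>A. \<forall>b\<in>A. a \<noteq> b \<longrightarrow> \<not> conn (F - {A}) a b)"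
  using acyc_sep acyc_crit by metis

lemma acyc_mono: "acyc F \<Longrightarrow> G \<subseteq> F \<Longrightarrow> acyc G"
  unfolding acyc_iff by (meson Diff_mono conn_mono order_refl subsetD)

lemma both_false: "\<not> P \<Longrightarrow> \<not> Q \<Longrightarrow> P = Q" by blast
lemma both_true: "P \<Longrightarrow> Q \<Longrightarrow> P = Q" by blast


definition Edges :: "nat set \<Rightarrow> nat set set" where
  "Edges V = {A. A \<subseteq> V \<and> 2 \<le> card A}"

definition RF :: "nat set \<Rightarrow> nat set \<Rightarrow> nat set set set" where
  "RF V R = {F. F \<subseteq> Edges V \<and> acyc F \<and> R \<subseteq> V \<and> (\<forall>u\<in>V. \<exists>\<rho>\<in>R. conn F u \<rho>) \<and>
      (\<forall>\<rho>\<in>R. \<forall>\<sigma>\<in>R. conn F \<rho> \<sigma> \<longrightarrow> \<rho> = \<sigma>)}"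

definition ES :: "nat set \<Rightarrow> nat set \<Rightarrow> nat set set set" where
  "ES M R = {E. (\<forall>A\<in>E. \<exists>\<rho>\<in>R. \<exists>S. A = insert \<rho> S \<and> S \<subseteq> M \<and> S \<noteq> {}) \<and> (\<forall>x\<in>M. \<exists>!A. A \<in> E \<and> x \<in> A)}"

locale compo =
  fixes V R R' F' E
  assumes finV: "finite V" and RV: "R \<subseteq> V" and R'V: "R' \<subseteq> V - R"
    and F': "F' \<in> RF (V - R) R'" and E: "E \<in> ES R' R"
begin

lemma F'_edges: "B \<in> F' \<Longrightarrow> B \<subseteq> V - R"
  using F' by (auto simp: RF_def Edges_def)

lemma F'_acyc: "acyc F'" using F' by (simp add: RF_def)

lemma F'_root: "u \<in> V - R \<Longrightarrow> \<exists>r\<in>R'. conn F' u r" using F' by (simp add: RF_def)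

lemma F'_sep: "r1 \<in> R' \<Longrightarrow> r2 \<in> R' \<Longrightarrow> conn F' r1 r2 \<Longrightarrow> r1 = r2"
  using F' by (simp add: RF_def)

lemma E_form: "A \<in> E \<Longrightarrow> \<exists>\<rho>\<in>R. \<exists>S. A = insert \<rho> S \<and> S \<subseteq> R' \<and> S \<noteq> {}"
  using E by (simp add: ES_def)

lemma E_cover: "x \<in> R' \<Longrightarrow> \<exists>A\<in>E. x \<in> A"
  using E by (auto simp: ES_def)

lemma E_uniq: "x \<in> R' \<Longrightarrow> A \<in> E \<Longrightarrow> B \<in> E \<Longrightarrow> x \<in> A \<Longrightarrow> x \<in> B \<Longrightarrow> A = B"
  using E unfolding ES_def by blast

lemma E_root1: "A \<in> E \<Longrightarrow> \<rho> \<in> A \<Longrightarrow> \<rho> \<in> R \<Longrightarrow> \<sigma> \<in> A \<Longrightarrow> \<sigma> \<in> R \<Longrightarrow> \<rho> = \<sigma>"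
  using E_form R'V by blast

lemma E_nonroot: "A \<in> E \<Longrightarrow> x \<in> A \<Longrightarrow> x \<notin> R \<Longrightarrow> x \<in> R'"
  using E_form by blast

lemma E_sub: "A \<in> E \<Longrightarrow> A \<subseteq> V"
  using E_form R'V RV by blast

lemma F'_E_disj: "B \<in> F' \<Longrightarrow> B \<notin> E"
  using F'_edges E_form by blast

lemma G_edges: "F' \<union> E \<subseteq> Edges V"
proof
  fix A assume "A \<in> F' \<union> E"
  then show "A \<in> Edges V"
  proof
    assume "A \<in> F'" then show ?thesis using F' by (auto simp: RF_def Edges_def)
  next
    assume A: "A \<in> E"
    then obtain \<rho> S where h: "\<rho> \<in> R" "A = insert \<rho> S" "S \<subseteq> R'" "S \<noteq> {}" using E_form by blast
    have SV: "S \<subseteq> V - R" using h(3) R'V by (rule order_trans)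
    have fs: "finite S" using finite_subset[OF _ finV] SV by blast
    have "\<rho> \<notin> S" using h(1) SV by blast
    then have "card A = Suc (card S)" using h fs by simp
    moreover have "card S \<ge> 1" using fs h by (simp add: Suc_leI card_gt_0_iff)
    ultimately show ?thesis using E_sub[OF A] by (simp add: Edges_def)
  qed
qed

lemma L1:
  assumes A: "A \<in> E" "A = insert \<rho> S" "\<rho> \<in> R" "S \<subseteq> R'" and a: "a \<in> S" and b: "b \<in> A" "b \<noteq> a"
  shows "\<not> conn ((F' \<union> E) - {A}) a b"
proof
  assume c: "conn ((F' \<union> E) - {A}) a b"
  let ?f = "\<lambda>x. x \<in> V - R \<and> conn F' x a"
  have "?f a = ?f b"
  proof (rule conn_inv[OF c])
    fix B x y assume B: "B \<in> F' \<union> E - {A}" and xy: "x \<in> B" "y \<in> B"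
    show "?f x = ?f y"
    proof (cases "B \<in> F'")
      case True
      then have "x \<in> V - R" "y \<in> V - R" "conn F' x y" using F'_edges xy conn_edge by blast+
      then show ?thesis using conn_trans conn_sym by blast
    next
      case False
      then have BE: "B \<in> E" "B \<noteq> A" using B by auto
      have "\<not> ?f z" if "z \<in> B" for z
      proof
        assume fz: "?f z"
        then have "z \<in> R'" using E_nonroot[OF BE(1) that] by blast
        moreover have "a \<in> R'" using a A by blast
        ultimately have "z = a" using F'_sep fz by blast
        then show False using E_uniq[OF \<open>a \<in> R'\<close> A(1) BE(1)] a A(2) that BE(2) by blast
      qed
      then show ?thesis using xy by blast
    qed
  qed
  moreover have "?f a" using a A R'V by (blast intro: conn.crefl)
  moreover have "\<not> ?f b"
  proof
    assume fb: "?f b"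
    then have "b \<noteq> \<rho>" using A by blast
    then have "b \<in> R'" using b A by blast
    moreover have "a \<in> R'" using a A by blast
    ultimately show False using F'_sep fb b by blast
  qed
  ultimately show False by blast
qed

lemma L2:
  assumes A: "A \<in> F'" and a: "a \<in> V - R" and nr: "\<forall>r\<in>R'. \<not> conn (F' - {A}) a r"
    and nab: "\<not> conn (F' - {A}) a b"
  shows "\<not> conn ((F' \<union> E) - {A}) a b"
proof
  assume c: "conn ((F' \<union> E) - {A}) a b"
  let ?f = "\<lambda>x. x \<in> V - R \<and> conn (F' - {A}) a x"
  have "?f a = ?f b"
  proof (rule conn_inv[OF c])
    fix B x y assume B: "B \<in> F' \<union> E - {A}" and xy: "x \<in> B" "y \<in> B"
    show "?f x = ?f y"
    proof (cases "B \<in> F'")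
      case True
      then have "x \<in> V - R" "y \<in> V - R" "conn (F' - {A}) x y"
        using F'_edges xy B conn_edge[of B "F' - {A}"] by blast+
      then show ?thesis using conn_trans conn_sym by blast
    next
      case False
      then have BE: "B \<in> E" using B by auto
      have "\<not> ?f z" if "z \<in> B" for z
        using E_nonroot[OF BE that] nr by blast
      then show ?thesis using xy by blast
    qed
  qed
  moreover have "?f a" using a by (blast intro: conn.crefl)
  ultimately show False using nab by blast
qed

lemma G_acyc: "acyc (F' \<union> E)"
proof (rule acyc_crit)
  fix A a b assume A: "A \<in> F' \<union> E" and ab: "a \<in> A" "b \<in> A" "a \<noteq> b"
  show "\<not> conn (F' \<union> E - {A}) a b"
  proof (cases "A \<in> E")
    case True
    then obtain \<rho> S where h: "\<rho> \<in> R" "A = insert \<rho> S" "S \<subseteq> R'" "S \<noteq> {}" using E_form by blast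
    show ?thesis
    proof (cases "a \<in> S")
      case True then show ?thesis using L1[OF \<open>A \<in> E\<close> h(2,1,3) True ab(2)] ab by blast
    next
      case False
      then have "b \<in> S" using ab h by blast
      then have "\<not> conn (F' \<union> E - {A}) b a" using L1[OF \<open>A \<in> E\<close> h(2,1,3) _ ab(1)] ab by blast
      then show ?thesis using conn_sym by blast
    qed
  next
    case False
    then have AF: "A \<in> F'" using A by blast
    have abV: "a \<in> V - R" "b \<in> V - R" using F'_edges[OF AF] ab by blast+
    have nab: "\<not> conn (F' - {A}) a b" using acyc_sep[OF F'_acyc AF ab] .
    show ?thesis
    proof (cases "\<forall>r\<in>R'. \<not> conn (F' - {A}) a r")
      case True then show ?thesis using L2[OF AF abV(1) True nab] by blast
    next
      case False
      then obtain r1 where r1: "r1 \<in> R'" "conn (F' - {A}) a r1" by blast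
      have "\<forall>r\<in>R'. \<not> conn (F' - {A}) b r"
      proof (intro ballI notI)
        fix r2 assume r2: "r2 \<in> R'" "conn (F' - {A}) b r2"
        have "conn F' r1 r2"
        proof -
          have "conn F' r1 a" using r1 conn_mono conn_sym by (metis Diff_subset)
          moreover have "conn F' a b" using conn_edge[OF AF ab(1,2)] .
          moreover have "conn F' b r2" using r2 conn_mono by (metis Diff_subset)
          ultimately show ?thesis using conn_trans by blast
        qed
        then have "r1 = r2" using F'_sep r1 r2 by blast
        then have "conn (F' - {A}) a b" using r1 r2 conn_trans conn_sym by metis
        then show False using nab by blast
      qed
      moreover have "\<not> conn (F' - {A}) b a" using nab conn_sym by blast
      ultimately have "\<not> conn (F' \<union> E - {A}) b a" using L2[OF AF abV(2)] by blast
      then show ?thesis using conn_sym by blast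
    qed
  qed
qed

lemma G_root: "u \<in> V \<Longrightarrow> \<exists>\<rho>\<in>R. conn (F' \<union> E) u \<rho>"
proof -
  assume u: "u \<in> V"
  show ?thesis
  proof (cases "u \<in> R")
    case True then show ?thesis by (blast intro: conn.crefl)
  next
    case False
    then obtain r where r: "r \<in> R'" "conn F' u r" using F'_root u by blast
    then obtain A where A: "A \<in> E" "r \<in> A" using E_cover by blast
    then obtain \<rho> S where h: "\<rho> \<in> R" "A = insert \<rho> S" using E_form by blast
    have "conn (F' \<union> E) u r" using r conn_mono by blast
    moreover have "conn (F' \<union> E) r \<rho>" using conn_edge[of A "F' \<union> E" r \<rho>] A h by blast
    ultimately show ?thesis using h conn_trans by blast
  qed
qed


lemma G_sep: "\<rho> \<in> R \<Longrightarrow> \<sigma> \<in> R \<Longrightarrow> conn (F' \<union> E) \<rho> \<sigma> \<Longrightarrow> \<rho> = \<sigma>"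
proof (rule ccontr)
  assume r: "\<rho> \<in> R" "\<sigma> \<in> R" and c: "conn (F' \<union> E) \<rho> \<sigma>" and ne: "\<rho> \<noteq> \<sigma>"
  define P where "P x \<longleftrightarrow> (\<exists>A\<in>E. \<rho> \<in> A \<and> (\<exists>r\<in>A \<inter> R'. conn F' x r))" for x
  define f where "f x \<longleftrightarrow> x = \<rho> \<or> (x \<in> V - R \<and> P x)" for x
  have "f \<rho> = f \<sigma>"
  proof (rule conn_inv[OF c])
    fix B x y assume B: "B \<in> F' \<union> E" and xy: "x \<in> B" "y \<in> B"
    show "f x = f y"
    proof (cases "B \<in> F'")
      case True
      then have xyV: "x \<in> V - R" "y \<in> V - R" using F'_edges xy by blast+
      have cxy: "conn F' x y" "conn F' y x" using True xy conn_edge by blast+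
      have "P x = P y" unfolding P_def using cxy conn_trans by blast
      moreover have "x \<noteq> \<rho>" "y \<noteq> \<rho>" using xyV r(1) by auto
      ultimately show ?thesis using xyV unfolding f_def by simp
    next
      case False
      then have BE: "B \<in> E" using B by auto
      show ?thesis
      proof (cases "\<rho> \<in> B")
        case True
        have "f z" if "z \<in> B" for z
        proof (cases "z = \<rho>")
          case False
          then have "z \<notin> R" using E_root1[OF BE True r(1) that] by blast
          then have zR: "z \<in> R'" using E_nonroot[OF BE that] by blast
          then have "z \<in> V - R" using R'V by blast
          moreover have "z \<in> B \<inter> R'" using that zR by blast
          ultimately show ?thesis unfolding f_def P_def using BE True conn.crefl by blast
        qed (simp add: f_def)
        then show ?thesis using xy by (intro both_true)
      next
        case False
        have "\<not> f z" if "z \<in> B" for z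
        proof
          assume fz: "f z"
          have "z \<noteq> \<rho>" using False that by blast
          then have "z \<in> V - R" "P z" using fz unfolding f_def by auto
          then obtain A r' where Ar: "A \<in> E" "\<rho> \<in> A" "r' \<in> A \<inter> R'" "conn F' z r'"
            unfolding P_def by blast
          have zR: "z \<in> R'" using E_nonroot[OF BE that] \<open>z \<in> V - R\<close> by blast
          then have "z = r'" using F'_sep Ar(3,4) by blast
          then have "z \<in> A" using Ar by blast
          then have "A = B" using E_uniq[OF zR Ar(1) BE] that by blast
          then show False using Ar False by blast
        qed
        then show ?thesis using xy by (intro both_false)
      qed
    qed
  qed
  moreover have "f \<rho>" unfolding f_def by simp
  moreover have "\<not> f \<sigma>" using ne r unfolding f_def by blast
  ultimately show False by blast
qed

lemma G_RF: "F' \<union> E \<in> RF V R"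
  unfolding RF_def
proof (intro CollectI conjI ballI impI)
  show "F' \<union> E \<subseteq> Edges V" by (rule G_edges)
  show "acyc (F' \<union> E)" by (rule G_acyc)
  show "R \<subseteq> V" by (rule RV)
  show "\<exists>\<rho>\<in>R. conn (F' \<union> E) u \<rho>" if "u \<in> V" for u by (rule G_root[OF that])
  show "\<rho> = \<sigma>" if "\<rho> \<in> R" "\<sigma> \<in> R" "conn (F' \<union> E) \<rho> \<sigma>" for \<rho> \<sigma> by (rule G_sep[OF that])
qed

lemma E_meets: "A \<in> E \<Longrightarrow> A \<inter> R \<noteq> {}"
  using E_form by blast

lemma F'_avoids: "A \<in> F' \<Longrightarrow> A \<inter> R = {}"
  using F'_edges by blast

lemma recover_E: "E = {A \<in> F' \<union> E. A \<inter> R \<noteq> {}}"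
proof (intro set_eqI iffI)
  fix A assume "A \<in> E" then show "A \<in> {A \<in> F' \<union> E. A \<inter> R \<noteq> {}}" using E_meets by blast
next
  fix A assume "A \<in> {A \<in> F' \<union> E. A \<inter> R \<noteq> {}}"
  then have "A \<in> F' \<union> E" "A \<inter> R \<noteq> {}" by auto
  then show "A \<in> E" using F'_avoids by blast
qed

lemma recover_F': "F' = (F' \<union> E) - E"
  using F'_E_disj by blast

lemma recover_R': "R' = \<Union>E - R"
proof
  show "R' \<subseteq> \<Union>E - R" using E_cover R'V by blast
  show "\<Union>E - R \<subseteq> R'" using E_nonroot by blast
qed

end


locale decomp =
  fixes V R F
  assumes finV: "finite V" and F: "F \<in> RF V R"
begin

definition "EE0 = {A \<in> F. A \<inter> R \<noteq> {}}"
definition "FF0 = F - EE0"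
definition "RR0 = \<Union>EE0 - R"

lemma F_edges: "A \<in> F \<Longrightarrow> A \<subseteq> V" and F_card: "A \<in> F \<Longrightarrow> 2 \<le> card A"
  using F by (auto simp: RF_def Edges_def)

lemma F_acyc: "acyc F" using F by (simp add: RF_def)
lemma RV: "R \<subseteq> V" using F by (simp add: RF_def)
lemma F_root: "u \<in> V \<Longrightarrow> \<exists>\<rho>\<in>R. conn F u \<rho>" using F by (simp add: RF_def)
lemma F_sep: "\<rho> \<in> R \<Longrightarrow> \<sigma> \<in> R \<Longrightarrow> conn F \<rho> \<sigma> \<Longrightarrow> \<rho> = \<sigma>" using F by (simp add: RF_def)

lemma two_roots: "A \<in> F \<Longrightarrow> \<rho> \<in> A \<Longrightarrow> \<sigma> \<in> A \<Longrightarrow> \<rho> \<in> R \<Longrightarrow> \<sigma> \<in> R \<Longrightarrow> \<rho> = \<sigma>"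
  using F_sep conn_edge by metis

lemma FF0_sub: "FF0 \<subseteq> F" unfolding FF0_def by blast
lemma FF0_edges: "B \<in> FF0 \<Longrightarrow> B \<subseteq> V - R"
  unfolding FF0_def EE0_def using F_edges by blast

lemma EE0_nonroot: "A \<in> EE0 \<Longrightarrow> x \<in> A \<Longrightarrow> x \<notin> R \<Longrightarrow> x \<in> RR0"
  unfolding RR0_def by blast

lemma RR0_sub: "RR0 \<subseteq> V - R"
  unfolding RR0_def EE0_def using F_edges by blast

lemma FF0_RF: "FF0 \<in> RF (V - R) RR0"
  unfolding RF_def
proof (intro CollectI conjI ballI impI)
  show "FF0 \<subseteq> Edges (V - R)" using FF0_edges FF0_sub F_card by (auto simp: Edges_def)
  show "acyc FF0" using acyc_mono[OF F_acyc FF0_sub] .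
  show "RR0 \<subseteq> V - R" by (rule RR0_sub)
next
  fix u assume u: "u \<in> V - R"
  show "\<exists>r\<in>RR0. conn FF0 u r"
  proof (rule ccontr)
    assume nr: "\<not> (\<exists>r\<in>RR0. conn FF0 u r)"
    obtain \<rho> where \<rho>: "\<rho> \<in> R" "conn F u \<rho>" using F_root u by blast
    define f where "f x \<longleftrightarrow> x \<in> V - R \<and> conn FF0 u x" for x
    have "f u = f \<rho>"
    proof (rule conn_inv[OF \<rho>(2)])
      fix B x y assume B: "B \<in> F" and xy: "x \<in> B" "y \<in> B"
      show "f x = f y"
      proof (cases "B \<in> FF0")
        case True
        then have "x \<in> V - R" "y \<in> V - R" "conn FF0 x y" "conn FF0 y x"
          using FF0_edges xy conn_edge by blast+
        then show ?thesis unfolding f_def using conn_trans by blast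
      next
        case False
        then have BE: "B \<in> EE0" using B unfolding FF0_def by blast
        have "\<not> f z" if "z \<in> B" for z
          using EE0_nonroot[OF BE that] nr unfolding f_def by blast
        then show ?thesis using xy by (intro both_false)
      qed
    qed
    moreover have "f u" using u unfolding f_def by (simp add: conn.crefl)
    moreover have "\<not> f \<rho>" using \<rho> unfolding f_def by blast
    ultimately show False by blast
  qed
next
  fix r1 r2 assume r: "r1 \<in> RR0" "r2 \<in> RR0" "conn FF0 r1 r2"
  show "r1 = r2"
  proof (rule ccontr)
    assume ne: "r1 \<noteq> r2"
    obtain A1 \<rho>1 where A1: "A1 \<in> F" "r1 \<in> A1" "\<rho>1 \<in> A1" "\<rho>1 \<in> R" "r1 \<notin> R"
      using r(1) unfolding RR0_def EE0_def by blast
    obtain A2 \<rho>2 where A2: "A2 \<in> F" "r2 \<in> A2" "\<rho>2 \<in> A2" "\<rho>2 \<in> R" "r2 \<notin> R"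
      using r(2) unfolding RR0_def EE0_def by blast
    have A1E: "A1 \<notin> FF0" using A1 unfolding FF0_def EE0_def by blast
    have cF: "conn F r1 r2" using conn_mono[OF r(3) FF0_sub] .
    have "conn F \<rho>1 \<rho>2"
      using conn_edge[OF A1(1,3,2)] cF conn_edge[OF A2(1,2,3)] conn_trans by metis
    then have eq: "\<rho>1 = \<rho>2" using F_sep A1 A2 by blast
    have sub: "FF0 \<subseteq> F - {A1}" using A1E FF0_sub by blast
    show False
    proof (cases "A1 = A2")
      case True
      have "conn (F - {A1}) r1 r2" using conn_mono[OF r(3) sub] .
      then show False using acyc_sep[OF F_acyc A1(1,2)] A2(2) True ne by blast
    next
      case False
      have "A2 \<in> F - {A1}" using A2 False by blast
      then have "conn (F - {A1}) \<rho>1 r2" using conn_edge A2(2,3) eq by metis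
      moreover have "conn (F - {A1}) r2 r1" using conn_sym conn_mono[OF r(3) sub] by blast
      ultimately have "conn (F - {A1}) \<rho>1 r1" using conn_trans by blast
      moreover have "\<rho>1 \<noteq> r1" using A1 by blast
      ultimately show False using acyc_sep[OF F_acyc A1(1,3,2)] by blast
    qed
  qed
qed

lemma EE0_ES: "EE0 \<in> ES RR0 R"
  unfolding ES_def
proof (intro CollectI conjI ballI)
  fix A assume A: "A \<in> EE0"
  then obtain \<rho> where \<rho>: "\<rho> \<in> A" "\<rho> \<in> R" unfolding EE0_def by blast
  have AF: "A \<in> F" using A unfolding EE0_def by blast
  have "A - {\<rho>} \<subseteq> RR0"
  proof
    fix x assume x: "x \<in> A - {\<rho>}"
    then have "x \<notin> R" using two_roots[OF AF \<rho>(1) _ \<rho>(2)] by blast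
    then show "x \<in> RR0" using EE0_nonroot A x by blast
  qed
  moreover have "A - {\<rho>} \<noteq> {}"
  proof
    assume "A - {\<rho>} = {}"
    then have "A = {\<rho>}" using \<rho> by blast
    then show False using F_card[OF AF] by simp
  qed
  moreover have "A = insert \<rho> (A - {\<rho>})" using \<rho> by blast
  ultimately show "\<exists>\<rho>\<in>R. \<exists>S. A = insert \<rho> S \<and> S \<subseteq> RR0 \<and> S \<noteq> {}" using \<rho>(2) by blast
next
  fix x assume x: "x \<in> RR0"
  then obtain A where A: "A \<in> EE0" "x \<in> A" unfolding RR0_def by blast
  have xR: "x \<notin> R" using x unfolding RR0_def by blast
  show "\<exists>!A. A \<in> EE0 \<and> x \<in> A"
  proof (rule ex1I[of _ A])
    show "A \<in> EE0 \<and> x \<in> A" using A by blast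
  next
    fix B assume B: "B \<in> EE0 \<and> x \<in> B"
    show "B = A"
    proof (rule ccontr)
      assume ne: "B \<noteq> A"
      obtain \<rho> where \<rho>: "\<rho> \<in> A" "\<rho> \<in> R" using A(1) unfolding EE0_def by blast
      obtain \<sigma> where \<sigma>: "\<sigma> \<in> B" "\<sigma> \<in> R" using B unfolding EE0_def by blast
      have AF: "A \<in> F" and BF: "B \<in> F" using A B unfolding EE0_def by blast+
      have "conn F \<rho> \<sigma>" using conn_edge[OF AF \<rho>(1) A(2)] conn_edge[OF BF _ \<sigma>(1)] B conn_trans by metis
      then have "\<rho> = \<sigma>" using F_sep \<rho> \<sigma> by blast
      moreover have "B \<in> F - {A}" using BF ne by blast
      ultimately have "conn (F - {A}) \<rho> x" using conn_edge \<sigma>(1) B by metis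
      moreover have "\<rho> \<noteq> x" using xR \<rho> by blast
      ultimately show False using acyc_sep[OF F_acyc AF \<rho>(1) A(2)] by blast
    qed
  qed
qed

lemma F_eq: "F = FF0 \<union> EE0" unfolding FF0_def EE0_def by blast

end


lemma sum_pow_card:
  fixes h :: "nat \<Rightarrow> 'a::comm_semiring_1"
  assumes X: "finite X"
  shows "(\<Sum>S\<in>Pow X. h (card S)) = (\<Sum>j=0..card X. of_nat (card X choose j) * h j)"
proof -
  have "(\<Sum>S\<in>Pow X. h (card S)) = (\<Sum>j\<in>{0..card X}. \<Sum>S\<in>{S. S \<in> Pow X \<and> card S = j}. h (card S))"
  proof (rule sum.group[symmetric])
    show "finite (Pow X)" using X by simp
    show "finite {0..card X}" by simp
    show "card ` Pow X \<subseteq> {0..card X}"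
    proof
      fix j assume "j \<in> card ` Pow X"
      then obtain S where "S \<subseteq> X" "j = card S" by auto
      then show "j \<in> {0..card X}" using card_mono[OF X] by simp
    qed
  qed
  also have "\<dots> = (\<Sum>j=0..card X. of_nat (card X choose j) * h j)"
  proof (rule sum.cong[OF refl])
    fix j
    have "(\<Sum>S\<in>{S. S \<in> Pow X \<and> card S = j}. h (card S)) = (\<Sum>S\<in>{S. S \<subseteq> X \<and> card S = j}. h j)"
      by (rule sum.cong) auto
    also have "\<dots> = of_nat (card {S. S \<subseteq> X \<and> card S = j}) * h j" by simp
    also have "\<dots> = of_nat (card X choose j) * h j" using n_subsets[OF X] by simp
    finally show "(\<Sum>S\<in>{S. S \<in> Pow X \<and> card S = j}. h (card S)) = of_nat (card X choose j) * h j" .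
  qed
  finally show ?thesis .
qed

lemma ES_sub: "E \<in> ES M R \<Longrightarrow> A \<in> E \<Longrightarrow> \<exists>\<rho>\<in>R. \<exists>S. A = insert \<rho> S \<and> S \<subseteq> M \<and> S \<noteq> {}"
  by (simp add: ES_def)

lemma ex1_uniq: "\<exists>!x. P x \<Longrightarrow> P a \<Longrightarrow> P b \<Longrightarrow> a = b" by blast

lemma ES_cover: "E \<in> ES M R \<Longrightarrow> y \<in> M \<Longrightarrow> \<exists>!A. A \<in> E \<and> y \<in> A"
  by (simp add: ES_def)

lemma ES_intro:
  "(\<And>A. A \<in> E \<Longrightarrow> \<exists>\<rho>\<in>R. \<exists>S. A = insert \<rho> S \<and> S \<subseteq> M \<and> S \<noteq> {}) \<Longrightarrow>
   (\<And>y. y \<in> M \<Longrightarrow> \<exists>!A. A \<in> E \<and> y \<in> A) \<Longrightarrow> E \<in> ES M R"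
  by (simp add: ES_def)

lemma ES_pow: "E \<in> ES M R \<Longrightarrow> E \<subseteq> Pow (R \<union> M)"
proof
  fix A assume "E \<in> ES M R" "A \<in> E"
  then obtain \<rho> S where "\<rho> \<in> R" "A = insert \<rho> S" "S \<subseteq> M" using ES_sub by blast
  then show "A \<in> Pow (R \<union> M)" by blast
qed

lemma ES_finite:
  assumes "finite M" "finite R"
  shows "finite (ES M R)"
proof (rule finite_subset[of _ "Pow (Pow (R \<union> M))"])
  show "ES M R \<subseteq> Pow (Pow (R \<union> M))" using ES_pow by blast
qed (use assms in simp)

lemma ES_elem_finite: "finite M \<Longrightarrow> finite R \<Longrightarrow> E \<in> ES M R \<Longrightarrow> finite E"
  using ES_pow[of E M R] finite_subset by (metis finite_Pow_iff finite_Un)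

lemma ES_empty: "ES {} R = {{}}"
proof (intro set_eqI iffI)
  fix E assume E: "E \<in> ES {} R"
  have "E = {}"
  proof (rule ccontr)
    assume "E \<noteq> {}"
    then obtain A where "A \<in> E" by blast
    then show False using ES_sub[OF E] by blast
  qed
  then show "E \<in> {{}}" by simp
next
  fix E :: "nat set set" assume "E \<in> {{}}"
  then show "E \<in> ES {} R" by (simp add: ES_def)
qed

lemma ES_noedge:
  assumes "E0 \<in> ES N R" "x \<notin> N" "x \<notin> R" "B \<in> E0"
  shows "x \<notin> B"
proof -
  obtain \<sigma> S where "\<sigma> \<in> R" "B = insert \<sigma> S" "S \<subseteq> N" using ES_sub[OF assms(1,4)] by blast
  then show ?thesis using assms(2,3) by blast
qed

locale esrec =
  fixes M R :: "nat set" and x :: nat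
  assumes finM: "finite M" and finR: "finite R" and disj: "M \<inter> R = {}" and x: "x \<in> M"
begin

definition "UU = Sigma (R \<times> {S. S \<subseteq> M \<and> x \<in> S}) (\<lambda>p. ES (M - snd p) R)"
definition "Psi = (\<lambda>(p, E0). insert (insert (fst p) (snd p)) E0)"

lemma UU_mem: "((\<rho>, S), E0) \<in> UU \<longleftrightarrow> \<rho> \<in> R \<and> S \<subseteq> M \<and> x \<in> S \<and> E0 \<in> ES (M - S) R"
  unfolding UU_def by auto

lemma x_notin_E0: "((\<rho>, S), E0) \<in> UU \<Longrightarrow> B \<in> E0 \<Longrightarrow> x \<notin> B"
  using ES_noedge[of E0 "M - S" R x B] disj x unfolding UU_mem by blast

lemma Psi_in: assumes u: "((\<rho>, S), E0) \<in> UU" shows "Psi ((\<rho>, S), E0) \<in> ES M R"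
proof -
  have h: "\<rho> \<in> R" "S \<subseteq> M" "x \<in> S" "E0 \<in> ES (M - S) R" using u UU_mem by auto
  let ?A = "insert \<rho> S"
  have e1: "\<exists>\<sigma>\<in>R. \<exists>T. A = insert \<sigma> T \<and> T \<subseteq> M \<and> T \<noteq> {}" if A: "A \<in> insert ?A E0" for A
  proof (cases "A = ?A")
    case True then show ?thesis using h by blast
  next
    case False
    then have "A \<in> E0" using A by blast
    then obtain \<sigma> T where "\<sigma> \<in> R" "A = insert \<sigma> T" "T \<subseteq> M - S" "T \<noteq> {}" using ES_sub[OF h(4)] by blast
    then show ?thesis by blast
  qed
  have e2: "\<exists>!B. B \<in> insert ?A E0 \<and> y \<in> B" if y: "y \<in> M" for y
  proof (cases "y \<in> S")
    case True
    show ?thesis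
    proof (rule ex1I[of _ ?A])
      show "?A \<in> insert ?A E0 \<and> y \<in> ?A" using True by blast
      fix B assume B: "B \<in> insert ?A E0 \<and> y \<in> B"
      show "B = ?A"
      proof (rule ccontr)
        assume "B \<noteq> ?A"
        then have "B \<in> E0" using B by blast
        moreover have "y \<notin> M - S" "y \<notin> R" using True y disj by blast+
        ultimately show False using ES_noedge[OF h(4)] B by blast
      qed
    qed
  next
    case False
    then have yMS: "y \<in> M - S" using y by blast
    then have u1: "\<exists>!B. B \<in> E0 \<and> y \<in> B" using ES_cover[OF h(4)] by blast
    then obtain B where B: "B \<in> E0" "y \<in> B" by blast
    have B3: "C = B" if "C \<in> E0 \<and> y \<in> C" for C using ex1_uniq[OF u1 that] B by blast
    have yA: "y \<notin> ?A" using False y disj h(1) by blast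
    show ?thesis
    proof (rule ex1I[of _ B])
      show "B \<in> insert ?A E0 \<and> y \<in> B" using B by blast
      fix C assume "C \<in> insert ?A E0 \<and> y \<in> C"
      then show "C = B" using B3 yA by blast
    qed
  qed
  have "Psi ((\<rho>, S), E0) = insert ?A E0" by (simp add: Psi_def)
  then show ?thesis using ES_intro[OF e1 e2] by simp
qed

lemma Psi_inj: "inj_on Psi UU"
proof (rule inj_onI)
  fix a b assume a: "a \<in> UU" and b: "b \<in> UU" and eq: "Psi a = Psi b"
  obtain \<rho>1 S1 E1 where a': "a = ((\<rho>1, S1), E1)" using prod.collapse by metis
  obtain \<rho>2 S2 E2 where b': "b = ((\<rho>2, S2), E2)" using prod.collapse by metis
  have h1: "\<rho>1 \<in> R" "S1 \<subseteq> M" "x \<in> S1" using a a' UU_mem by auto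
  have h2: "\<rho>2 \<in> R" "S2 \<subseteq> M" "x \<in> S2" using b b' UU_mem by auto
  have a1: "((\<rho>1, S1), E1) \<in> UU" using a a' by simp
  have b1: "((\<rho>2, S2), E2) \<in> UU" using b b' by simp
  note n1 = x_notin_E0[OF a1] and n2 = x_notin_E0[OF b1]
  have pa: "Psi a = insert (insert \<rho>1 S1) E1" unfolding a' Psi_def by simp
  have pb: "Psi b = insert (insert \<rho>2 S2) E2" unfolding b' Psi_def by simp
  have E: "insert (insert \<rho>1 S1) E1 = insert (insert \<rho>2 S2) E2" using eq unfolding pa pb .
  have AA: "insert \<rho>1 S1 = insert \<rho>2 S2"
  proof -
    have "insert \<rho>2 S2 \<in> insert (insert \<rho>2 S2) E2" by simp
    then have "insert \<rho>2 S2 \<in> insert (insert \<rho>1 S1) E1" unfolding E .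
    then have "insert \<rho>2 S2 = insert \<rho>1 S1 \<or> insert \<rho>2 S2 \<in> E1" by simp
    moreover have "insert \<rho>2 S2 \<notin> E1"
    proof
      assume "insert \<rho>2 S2 \<in> E1"
      from n1[OF this] h2(3) show False by simp
    qed
    ultimately show ?thesis by simp
  qed
  have r: "\<rho>1 = \<rho>2"
  proof -
    have "\<rho>1 \<notin> S2" "\<rho>2 \<notin> S1" using h1 h2 disj by blast+
    then show ?thesis using AA by blast
  qed
  have S: "S1 = S2"
  proof -
    have "\<rho>1 \<notin> S1" "\<rho>2 \<notin> S2" using h1 h2 disj by blast+
    then have e: "insert \<rho>1 S1 - {\<rho>1} = S1" "insert \<rho>2 S2 - {\<rho>2} = S2" by simp_all
    have "insert \<rho>1 S1 - {\<rho>1} = insert \<rho>2 S2 - {\<rho>2}" using AA r by simp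
    then show ?thesis unfolding e .
  qed
  have "insert \<rho>1 S1 \<notin> E1" using n1 h1(3) by blast
  moreover have "insert \<rho>2 S2 \<notin> E2" using n2 h2(3) by blast
  ultimately have e: "insert (insert \<rho>1 S1) E1 - {insert \<rho>1 S1} = E1" "insert (insert \<rho>2 S2) E2 - {insert \<rho>2 S2} = E2"
    by simp_all
  have "insert (insert \<rho>1 S1) E1 - {insert \<rho>1 S1} = insert (insert \<rho>2 S2) E2 - {insert \<rho>2 S2}"
    using E AA by simp
  then have "E1 = E2" unfolding e .
  then show "a = b" using a' b' r S by simp
qed

lemma Psi_surj: "E \<in> ES M R \<Longrightarrow> E \<in> Psi ` UU"
proof -
  assume E: "E \<in> ES M R"
  have u1: "\<exists>!A. A \<in> E \<and> x \<in> A" using ES_cover[OF E x] .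
  then obtain A where A: "A \<in> E" "x \<in> A" by blast
  obtain \<rho> S where h: "\<rho> \<in> R" "A = insert \<rho> S" "S \<subseteq> M" "S \<noteq> {}"
    using ES_sub[OF E A(1)] by blast
  have xS: "x \<in> S" using A h x disj by blast
  let ?E0 = "E - {A}"
  have "?E0 \<in> ES (M - S) R"
  proof (rule ES_intro)
    fix B assume B: "B \<in> ?E0"
    then obtain \<sigma> T where t: "\<sigma> \<in> R" "B = insert \<sigma> T" "T \<subseteq> M" "T \<noteq> {}"
      using ES_sub[OF E] by blast
    have "T \<inter> S = {}"
    proof (rule ccontr)
      assume "T \<inter> S \<noteq> {}"
      then obtain y where y: "y \<in> T" "y \<in> S" by blast
      then have "y \<in> M" using h by blast
      then have "\<exists>!C. C \<in> E \<and> y \<in> C" using ES_cover[OF E] by blast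
      moreover have "A \<in> E \<and> y \<in> A" "B \<in> E \<and> y \<in> B" using A y h t B by blast+
      moreover have "A \<noteq> B" using B by blast
      ultimately show False using ex1_uniq by metis
    qed
    then show "\<exists>\<sigma>\<in>R. \<exists>T. B = insert \<sigma> T \<and> T \<subseteq> M - S \<and> T \<noteq> {}" using t by blast
  next
    fix y assume y: "y \<in> M - S"
    then have u2: "\<exists>!B. B \<in> E \<and> y \<in> B" using ES_cover[OF E] by blast
    then obtain B where B: "B \<in> E" "y \<in> B" by blast
    have B3: "C = B" if "C \<in> E \<and> y \<in> C" for C using ex1_uniq[OF u2 that] B by blast
    have "y \<notin> A" using y h disj by blast
    then have "B \<noteq> A" using B by blast
    show "\<exists>!C. C \<in> ?E0 \<and> y \<in> C"
    proof (rule ex1I[of _ B])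
      show "B \<in> ?E0 \<and> y \<in> B" using B \<open>B \<noteq> A\<close> by blast
      fix C assume "C \<in> ?E0 \<and> y \<in> C"
      then show "C = B" using B3 by blast
    qed
  qed
  then have "((\<rho>, S), ?E0) \<in> UU" using h xS UU_mem by blast
  moreover have "Psi ((\<rho>, S), ?E0) = E" using insert_Diff[OF A(1)] h(2) unfolding Psi_def by simp
  ultimately show ?thesis by (metis image_eqI)
qed

lemma Psi_image: "Psi ` UU = ES M R"
  using Psi_in Psi_surj by auto

lemma ES_rec:
  fixes w :: "nat \<Rightarrow> 'a::comm_ring_1"
  shows "(\<Sum>E\<in>ES M R. hf_weight w E) =
    of_nat (card R) * (\<Sum>S\<in>{S. S \<subseteq> M \<and> x \<in> S}. w (Suc (card S)) * (\<Sum>E\<in>ES (M - S) R. hf_weight w E))"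
proof -
  have "(\<Sum>E\<in>ES M R. hf_weight w E) = (\<Sum>u\<in>UU. hf_weight w (Psi u))"
    using sum.reindex[OF Psi_inj, of "hf_weight w"] Psi_image by (simp add: comp_def)
  also have "\<dots> = (\<Sum>p\<in>R \<times> {S. S \<subseteq> M \<and> x \<in> S}. \<Sum>E0\<in>ES (M - snd p) R. hf_weight w (Psi (p, E0)))"
  proof -
    have "{S. S \<subseteq> M \<and> x \<in> S} \<subseteq> Pow M" by blast
    then have fin1: "finite (R \<times> {S. S \<subseteq> M \<and> x \<in> S})" using finR finM finite_subset by blast
    have fin2: "\<forall>p\<in>R \<times> {S. S \<subseteq> M \<and> x \<in> S}. finite (ES (M - snd p) R)"
      using ES_finite finM finR by blast
    show ?thesis
      using sum.Sigma[OF fin1 fin2, of "\<lambda>p E0. hf_weight w (Psi (p, E0))"] unfolding UU_def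
      by (simp add: case_prod_eta)
  qed
  also have "\<dots> = (\<Sum>p\<in>R \<times> {S. S \<subseteq> M \<and> x \<in> S}. w (Suc (card (snd p))) * (\<Sum>E0\<in>ES (M - snd p) R. hf_weight w E0))"
  proof (rule sum.cong[OF refl])
    fix p assume p: "p \<in> R \<times> {S. S \<subseteq> M \<and> x \<in> S}"
    obtain \<rho> S where pp: "p = (\<rho>, S)" by (metis prod.collapse)
    have h: "\<rho> \<in> R" "S \<subseteq> M" "x \<in> S" using p pp by auto
    have finS: "finite S" using h finM finite_subset by blast
    have rS: "\<rho> \<notin> S" using h disj by blast
    show "(\<Sum>E0\<in>ES (M - snd p) R. hf_weight w (Psi (p, E0))) =
        w (Suc (card (snd p))) * (\<Sum>E0\<in>ES (M - snd p) R. hf_weight w E0)"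
      unfolding sum_distrib_left
    proof (rule sum.cong[OF refl])
      fix E0 assume E0: "E0 \<in> ES (M - snd p) R"
      have u: "((\<rho>, S), E0) \<in> UU" using h E0 pp UU_mem by simp
      have "insert \<rho> S \<notin> E0" using x_notin_E0[OF u] h by blast
      moreover have "finite E0" using ES_elem_finite[OF _ finR E0] finM by blast
      ultimately have "hf_weight w (insert (insert \<rho> S) E0) = w (card (insert \<rho> S)) * hf_weight w E0"
        unfolding hf_weight_def by simp
      then show "hf_weight w (Psi (p, E0)) = w (Suc (card (snd p))) * hf_weight w E0"
        using pp finS rS unfolding Psi_def by simp
    qed
  qed
  also have "\<dots> = (\<Sum>\<rho>\<in>R. \<Sum>S\<in>{S. S \<subseteq> M \<and> x \<in> S}. w (Suc (card S)) * (\<Sum>E0\<in>ES (M - S) R. hf_weight w E0))"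
    by (rule sum.cartesian_product[symmetric, where A=R and B="{S. S \<subseteq> M \<and> x \<in> S}",
          of "\<lambda>\<rho> S. w (Suc (card S)) * (\<Sum>E0\<in>ES (M - S) R. hf_weight w E0)", simplified split_def])
  also have "\<dots> = of_nat (card R) * (\<Sum>S\<in>{S. S \<subseteq> M \<and> x \<in> S}. w (Suc (card S)) * (\<Sum>E\<in>ES (M - S) R. hf_weight w E))"
    by simp
  finally show ?thesis .
qed

end


lemma hf_weight_empty[simp]: "hf_weight w {} = 1"
  by (simp add: hf_weight_def)

lemma ES_closed:
  fixes w :: "nat \<Rightarrow> 'a::field_char_0"
  assumes "finite M" "finite R" "M \<inter> R = {}"
  shows "(\<Sum>E\<in>ES M R. hf_weight w E) = P_poly (card M) (of_nat (card R)) w"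
  using assms
proof (induction "card M" arbitrary: M rule: less_induct)
  case less
  show ?case
  proof (cases "M = {}")
    case True
    then show ?thesis by (simp add: ES_empty P_0)
  next
    case False
    then obtain x where x: "x \<in> M" by blast
    interpret esrec M R x using less.prems x by unfold_locales auto
    obtain m where m: "card M = Suc m" using x less.prems(1) by (metis card_Suc_Diff1)
    have cMx: "card (M - {x}) = m" using m x less.prems(1) by simp
    have finMx: "finite (M - {x})" using less.prems(1) by simp
    let ?r = "of_nat (card R) :: 'a"
    have "(\<Sum>E\<in>ES M R. hf_weight w E) =
      ?r * (\<Sum>S\<in>{S. S \<subseteq> M \<and> x \<in> S}. w (Suc (card S)) * (\<Sum>E\<in>ES (M - S) R. hf_weight w E))"
      by (rule ES_rec)
    also have "(\<Sum>S\<in>{S. S \<subseteq> M \<and> x \<in> S}. w (Suc (card S)) * (\<Sum>E\<in>ES (M - S) R. hf_weight w E))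
        = (\<Sum>S\<in>{S. S \<subseteq> M \<and> x \<in> S}. w (Suc (card S)) * P_poly (card (M - S)) ?r w)"
    proof (rule sum.cong[OF refl])
      fix S assume S: "S \<in> {S. S \<subseteq> M \<and> x \<in> S}"
      have "card (M - S) < card M" using S less.prems(1) x by (intro psubset_card_mono) auto
      then have "(\<Sum>E\<in>ES (M - S) R. hf_weight w E) = P_poly (card (M - S)) ?r w"
        using less.hyps[of "M - S"] less.prems by auto
      then show "w (Suc (card S)) * (\<Sum>E\<in>ES (M - S) R. hf_weight w E) = w (Suc (card S)) * P_poly (card (M - S)) ?r w"
        by simp
    qed
    also have "\<dots> = (\<Sum>S'\<in>Pow (M - {x}). w (Suc (card (insert x S'))) * P_poly (card (M - insert x S')) ?r w)"
    proof -
      have inj: "inj_on (insert x) (Pow (M - {x}))"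
        by (rule inj_onI) (metis Diff_insert_absorb PowD subset_Diff_insert)
      have img: "insert x ` Pow (M - {x}) = {S. S \<subseteq> M \<and> x \<in> S}"
      proof (intro set_eqI iffI)
        fix S assume "S \<in> insert x ` Pow (M - {x})"
        then show "S \<in> {S. S \<subseteq> M \<and> x \<in> S}" using x by auto
      next
        fix S assume S: "S \<in> {S. S \<subseteq> M \<and> x \<in> S}"
        then have "S = insert x (S - {x})" "S - {x} \<in> Pow (M - {x})" by auto
        then show "S \<in> insert x ` Pow (M - {x})" by (metis image_eqI)
      qed
      show ?thesis using sum.reindex[OF inj, of "\<lambda>S. w (Suc (card S)) * P_poly (card (M - S)) ?r w"]
        unfolding img by (simp add: comp_def)
    qed
    also have "\<dots> = (\<Sum>S'\<in>Pow (M - {x}). w (Suc (Suc (card S'))) * P_poly (m - card S') ?r w)"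
    proof (rule sum.cong[OF refl])
      fix S' assume S': "S' \<in> Pow (M - {x})"
      then have fS': "finite S'" using finMx finite_subset by blast
      have "x \<notin> S'" using S' by blast
      then have c1: "card (insert x S') = Suc (card S')" using fS' by simp
      have "M - insert x S' = (M - {x}) - S'" by blast
      then have "card (M - insert x S') = m - card S'"
        using card_Diff_subset[OF fS'] S' cMx by simp
      then show "w (Suc (card (insert x S'))) * P_poly (card (M - insert x S')) ?r w =
          w (Suc (Suc (card S'))) * P_poly (m - card S') ?r w" using c1 by simp
    qed
    also have "\<dots> = (\<Sum>j=0..m. of_nat (m choose j) * (w (Suc (Suc j)) * P_poly (m - j) ?r w))"
      using sum_pow_card[OF finMx, of "\<lambda>j. w (Suc (Suc j)) * P_poly (m - j) ?r w"] cMx by simp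
    finally have "(\<Sum>E\<in>ES M R. hf_weight w E) = ?r * (\<Sum>j=0..m. of_nat (m choose j) * (w (Suc (Suc j)) * P_poly (m - j) ?r w))" .
    also have "\<dots> = P_poly (Suc m) ?r w"
      unfolding P_rec by (simp add: mult.assoc numeral_2_eq_2)
    finally show ?thesis using m by simp
  qed
qed


lemma Edges_pow: "Edges V \<subseteq> Pow V" unfolding Edges_def by blast

lemma RF_finite: "finite V \<Longrightarrow> finite (RF V R)"
proof -
  assume V: "finite V"
  have "RF V R \<subseteq> Pow (Edges V)" unfolding RF_def by blast
  moreover have "finite (Edges V)" using finite_subset[OF Edges_pow] V by blast
  ultimately show ?thesis using finite_subset by blast
qed

lemma RF_elem_finite: "finite V \<Longrightarrow> F \<in> RF V R \<Longrightarrow> finite F"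
proof -
  assume V: "finite V" and F: "F \<in> RF V R"
  have "F \<subseteq> Edges V" using F unfolding RF_def by blast
  moreover have "finite (Edges V)" using finite_subset[OF Edges_pow] V by blast
  ultimately show ?thesis using finite_subset by blast
qed

definition "TT V R = Sigma (Pow (V - R)) (\<lambda>R'. RF (V - R) R' \<times> ES R' R)"
definition "Phi = (\<lambda>(R'::nat set, F'::nat set set, E::nat set set). F' \<union> E)"

lemma TT_mem: "(R', F', E) \<in> TT V R \<longleftrightarrow> R' \<subseteq> V - R \<and> F' \<in> RF (V - R) R' \<and> E \<in> ES R' R"
  unfolding TT_def by auto

lemma compo_TT: "finite V \<Longrightarrow> R \<subseteq> V \<Longrightarrow> (R', F', E) \<in> TT V R \<Longrightarrow> compo V R R' F' E"
  unfolding TT_mem by unfold_locales auto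

lemma Phi_inj:
  assumes V: "finite V" and R: "R \<subseteq> V"
  shows "inj_on Phi (TT V R)"
proof (rule inj_onI)
  fix a b assume a: "a \<in> TT V R" and b: "b \<in> TT V R" and eq: "Phi a = Phi b"
  obtain R1 F1 E1 where a': "a = (R1, F1, E1)" using prod.collapse by metis
  obtain R2 F2 E2 where b': "b = (R2, F2, E2)" using prod.collapse by metis
  interpret c1: compo V R R1 F1 E1 using compo_TT[OF V R] a a' by simp
  interpret c2: compo V R R2 F2 E2 using compo_TT[OF V R] b b' by simp
  have G: "F1 \<union> E1 = F2 \<union> E2" using eq a' b' unfolding Phi_def by simp
  have e: "E1 = E2" using c1.recover_E c2.recover_E G by simp
  have f: "F1 = F2" using c1.recover_F' c2.recover_F' G e by simp
  have r: "R1 = R2" using c1.recover_R' c2.recover_R' e by simp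
  show "a = b" using a' b' e f r by simp
qed

lemma Phi_image:
  assumes V: "finite V" and R: "R \<subseteq> V"
  shows "Phi ` TT V R = RF V R"
proof (intro set_eqI iffI)
  fix F assume "F \<in> Phi ` TT V R"
  then obtain t where t: "t \<in> TT V R" "F = Phi t" by blast
  obtain R1 F1 E1 where t': "t = (R1, F1, E1)" using prod.collapse by metis
  interpret c1: compo V R R1 F1 E1 using compo_TT[OF V R] t t' by simp
  show "F \<in> RF V R" using c1.G_RF t t' unfolding Phi_def by simp
next
  fix F assume F: "F \<in> RF V R"
  interpret d: decomp V R F using V F by unfold_locales
  have "(d.RR0, d.FF0, d.EE0) \<in> TT V R"
    unfolding TT_mem using d.RR0_sub d.FF0_RF d.EE0_ES by blast
  moreover have "Phi (d.RR0, d.FF0, d.EE0) = F" unfolding Phi_def using d.F_eq by simp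
  ultimately show "F \<in> Phi ` TT V R" by (metis image_eqI)
qed

lemma f_rec:
  fixes w :: "nat \<Rightarrow> 'a::comm_ring_1"
  assumes V: "finite V" and R: "R \<subseteq> V"
  shows "(\<Sum>F\<in>RF V R. hf_weight w F) =
    (\<Sum>R'\<in>Pow (V - R). (\<Sum>F'\<in>RF (V - R) R'. hf_weight w F') * (\<Sum>E\<in>ES R' R. hf_weight w E))"
proof -
  have finR: "finite R" using R V finite_subset by blast
  have "(\<Sum>F\<in>RF V R. hf_weight w F) = (\<Sum>t\<in>TT V R. hf_weight w (Phi t))"
    using sum.reindex[OF Phi_inj[OF V R], of "hf_weight w"] Phi_image[OF V R] by (simp add: comp_def)
  also have "\<dots> = (\<Sum>R'\<in>Pow (V - R). \<Sum>p\<in>RF (V - R) R' \<times> ES R' R. hf_weight w (Phi (R', p)))"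
  proof -
    have fin1: "finite (Pow (V - R))" using V by simp
    have fin2: "\<forall>R'\<in>Pow (V - R). finite (RF (V - R) R' \<times> ES R' R)"
    proof
      fix R' assume "R' \<in> Pow (V - R)"
      then have "finite R'" using V finite_subset by blast
      then show "finite (RF (V - R) R' \<times> ES R' R)" using RF_finite ES_finite finR V by simp
    qed
    show ?thesis
      using sum.Sigma[OF fin1 fin2, of "\<lambda>R' p. hf_weight w (Phi (R', p))"] unfolding TT_def
      by (simp add: case_prod_eta)
  qed
  also have "\<dots> = (\<Sum>R'\<in>Pow (V - R). \<Sum>F'\<in>RF (V - R) R'. \<Sum>E\<in>ES R' R. hf_weight w F' * hf_weight w E)"
  proof (rule sum.cong[OF refl])
    fix R' assume R': "R' \<in> Pow (V - R)"
    have "(\<Sum>p\<in>RF (V - R) R' \<times> ES R' R. hf_weight w (Phi (R', p))) =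
        (\<Sum>p\<in>RF (V - R) R' \<times> ES R' R. hf_weight w (fst p) * hf_weight w (snd p))"
    proof (rule sum.cong[OF refl])
      fix p assume p: "p \<in> RF (V - R) R' \<times> ES R' R"
      obtain F' E where p': "p = (F', E)" by fastforce
      have t: "(R', F', E) \<in> TT V R" using R' p p' TT_mem by auto
      interpret c: compo V R R' F' E using compo_TT[OF V R t] .
      have "finite F'" using RF_elem_finite[OF _ c.F'] V by blast
      moreover have "finite E" using ES_elem_finite[OF _ finR c.E] V R' finite_subset by blast
      moreover have "F' \<inter> E = {}" using c.F'_E_disj by blast
      ultimately show "hf_weight w (Phi (R', p)) = hf_weight w (fst p) * hf_weight w (snd p)"
        unfolding Phi_def hf_weight_def p' by (simp add: prod.union_disjoint)
    qed
    also have "\<dots> = (\<Sum>F'\<in>RF (V - R) R'. \<Sum>E\<in>ES R' R. hf_weight w F' * hf_weight w E)"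
      by (rule sum.cartesian_product[symmetric, of "\<lambda>F' E. hf_weight w F' * hf_weight w E", simplified split_def])
    finally show "(\<Sum>p\<in>RF (V - R) R' \<times> ES R' R. hf_weight w (Phi (R', p))) =
        (\<Sum>F'\<in>RF (V - R) R'. \<Sum>E\<in>ES R' R. hf_weight w F' * hf_weight w E)" .
  qed
  also have "\<dots> = (\<Sum>R'\<in>Pow (V - R). (\<Sum>F'\<in>RF (V - R) R'. hf_weight w F') * (\<Sum>E\<in>ES R' R. hf_weight w E))"
    by (simp add: sum_product)
  finally show ?thesis .
qed

lemma acyc_empty: "acyc {}"
  by (rule acyc_crit) simp

lemma RF_empty: "RF {} {} = {{}}"
proof (intro set_eqI iffI)
  fix F assume "F \<in> RF {} {}"
  then have "F \<subseteq> Edges {}" unfolding RF_def by blast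
  then show "F \<in> {{}}" unfolding Edges_def by auto
next
  fix F :: "nat set set" assume "F \<in> {{}}"
  then show "F \<in> RF {} {}" unfolding RF_def using acyc_empty by (simp add: conn.crefl)
qed

lemma RF_noroot: "V \<noteq> {} \<Longrightarrow> RF V {} = {}"
  unfolding RF_def by blast

lemma f_closed:
  fixes w :: "nat \<Rightarrow> 'a::field_char_0"
  assumes "finite V" "R \<subseteq> V"
  shows "(\<Sum>F\<in>RF V R. hf_weight w F) = closedF w (card V) (card R)"
  using assms
proof (induction "card V" arbitrary: V R rule: less_induct)
  case less
  note V = less.prems(1) and R = less.prems(2)
  show ?case
  proof (cases "R = {}")
    case True
    show ?thesis
    proof (cases "V = {}")
      case True
      then show ?thesis using \<open>R = {}\<close> by (simp add: RF_empty closedF_def)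
    next
      case False
      then have "card V \<noteq> 0" using V by simp
      then show ?thesis using \<open>R = {}\<close> False by (simp add: RF_noroot closedF_def)
    qed
  next
    case False
    have finR: "finite R" using R V finite_subset by blast
    have cR: "1 \<le> card R" using False finR by (simp add: Suc_le_eq card_gt_0_iff)
    have cVR: "card (V - R) < card V" using False R V by (intro psubset_card_mono) auto
    have cV: "card V = card R + card (V - R)" using card_Diff_subset[OF finR R] card_mono[OF V R] by simp
    let ?s = "card (V - R)" and ?r = "of_nat (card R) :: 'a"
    have "(\<Sum>F\<in>RF V R. hf_weight w F) =
      (\<Sum>R'\<in>Pow (V - R). (\<Sum>F'\<in>RF (V - R) R'. hf_weight w F') * (\<Sum>E\<in>ES R' R. hf_weight w E))"
      by (rule f_rec[OF V R])
    also have "\<dots> = (\<Sum>R'\<in>Pow (V - R). closedF w ?s (card R') * P_poly (card R') ?r w)"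
    proof (rule sum.cong[OF refl])
      fix R' assume R': "R' \<in> Pow (V - R)"
      have fR': "finite R'" using R' V finite_subset by blast
      have "(\<Sum>F'\<in>RF (V - R) R'. hf_weight w F') = closedF w ?s (card R')"
        using less.hyps[OF cVR, of R'] V R' by auto
      moreover have "(\<Sum>E\<in>ES R' R. hf_weight w E) = P_poly (card R') ?r w"
        using ES_closed[OF fR' finR] R' by blast
      ultimately show "(\<Sum>F'\<in>RF (V - R) R'. hf_weight w F') * (\<Sum>E\<in>ES R' R. hf_weight w E) =
          closedF w ?s (card R') * P_poly (card R') ?r w" by simp
    qed
    also have "\<dots> = (\<Sum>m=0..?s. of_nat (?s choose m) * (closedF w ?s m * P_poly m ?r w))"
      using sum_pow_card[of "V - R" "\<lambda>m. closedF w ?s m * P_poly m ?r w"] V by simp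
    also have "\<dots> = closedF w (card R + ?s) (card R)"
      using closedF_rec[OF cR, of w ?s] by (simp add: mult.assoc)
    finally show ?thesis using cV by simp
  qed
qed


definition compsV :: "nat set \<Rightarrow> nat set set \<Rightarrow> nat set set" where
  "compsV V F = (\<lambda>u. {v \<in> V. conn F u v}) ` V"

lemma components_eq: "components n F = compsV {1..n} F"
  unfolding components_def compsV_def connected_by_conn ..

lemma spanning_iff: "spanning_hyperforest n F \<longleftrightarrow> F \<subseteq> Edges {1..n} \<and> acyc F"
  unfolding spanning_hyperforest_def hyperedges_def Edges_def acyc_def by simp

lemma roots_iff:
  assumes R: "R \<subseteq> V"
  shows "(\<forall>C\<in>compsV V F. card (R \<inter> C) = 1) \<longleftrightarrow>
    (\<forall>u\<in>V. \<exists>\<rho>\<in>R. conn F u \<rho>) \<and> (\<forall>\<rho>\<in>R. \<forall>\<sigma>\<in>R. conn F \<rho> \<sigma> \<longrightarrow> \<rho> = \<sigma>)"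
proof -
  have eqC: "R \<inter> {v \<in> V. conn F u v} = {\<rho> \<in> R. conn F u \<rho>}" for u using R by blast
  show ?thesis
  proof
    assume h: "\<forall>C\<in>compsV V F. card (R \<inter> C) = 1"
    then have h': "card {\<rho> \<in> R. conn F u \<rho>} = 1" if "u \<in> V" for u
      using that eqC unfolding compsV_def by auto
    have ex: "\<forall>u\<in>V. \<exists>\<rho>\<in>R. conn F u \<rho>"
    proof
      fix u assume "u \<in> V"
      then have "{\<rho> \<in> R. conn F u \<rho>} \<noteq> {}" using h' by (metis card.empty zero_neq_one)
      then show "\<exists>\<rho>\<in>R. conn F u \<rho>" by blast
    qed
    have sep: "\<forall>\<rho>\<in>R. \<forall>\<sigma>\<in>R. conn F \<rho> \<sigma> \<longrightarrow> \<rho> = \<sigma>"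
    proof (intro ballI impI)
      fix \<rho> \<sigma> assume r: "\<rho> \<in> R" "\<sigma> \<in> R" "conn F \<rho> \<sigma>"
      have "card {\<tau> \<in> R. conn F \<rho> \<tau>} = 1" using h' r R by blast
      then obtain z where z: "{\<tau> \<in> R. conn F \<rho> \<tau>} = {z}" using card_1_singletonE by blast
      have "\<rho> \<in> {\<tau> \<in> R. conn F \<rho> \<tau>}" using r by (simp add: conn.crefl)
      moreover have "\<sigma> \<in> {\<tau> \<in> R. conn F \<rho> \<tau>}" using r by simp
      ultimately show "\<rho> = \<sigma>" unfolding z by simp
    qed
    show "(\<forall>u\<in>V. \<exists>\<rho>\<in>R. conn F u \<rho>) \<and> (\<forall>\<rho>\<in>R. \<forall>\<sigma>\<in>R. conn F \<rho> \<sigma> \<longrightarrow> \<rho> = \<sigma>)"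
      using ex sep by blast
  next
    assume h: "(\<forall>u\<in>V. \<exists>\<rho>\<in>R. conn F u \<rho>) \<and> (\<forall>\<rho>\<in>R. \<forall>\<sigma>\<in>R. conn F \<rho> \<sigma> \<longrightarrow> \<rho> = \<sigma>)"
    show "\<forall>C\<in>compsV V F. card (R \<inter> C) = 1"
    proof
      fix C assume "C \<in> compsV V F"
      then obtain u where u: "u \<in> V" "C = {v \<in> V. conn F u v}" unfolding compsV_def by blast
      obtain \<rho> where \<rho>: "\<rho> \<in> R" "conn F u \<rho>" using h u by blast
      have "{\<tau> \<in> R. conn F u \<tau>} = {\<rho>}"
      proof (intro set_eqI iffI)
        fix \<tau> assume "\<tau> \<in> {\<tau> \<in> R. conn F u \<tau>}"
        then have "\<tau> \<in> R" "conn F \<rho> \<tau>" using \<rho> conn_sym conn_trans by blast+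
        then show "\<tau> \<in> {\<rho>}" using h \<rho> by blast
      qed (use \<rho> in auto)
      then show "card (R \<inter> C) = 1" using u eqC by simp
    qed
  qed
qed

lemma card_comps:
  assumes "F \<in> RF V R"
  shows "card (compsV V F) = card R"
proof -
  have R: "R \<subseteq> V" and ex: "\<forall>u\<in>V. \<exists>\<rho>\<in>R. conn F u \<rho>" and sep: "\<forall>\<rho>\<in>R. \<forall>\<sigma>\<in>R. conn F \<rho> \<sigma> \<longrightarrow> \<rho> = \<sigma>"
    using assms unfolding RF_def by blast+
  let ?c = "\<lambda>u. {v \<in> V. conn F u v}"
  have same: "?c u = ?c \<rho>" if "conn F u \<rho>" for u \<rho>
    using that conn_sym conn_trans by blast
  have "compsV V F = ?c ` R"
  proof
    show "compsV V F \<subseteq> ?c ` R"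
    proof
      fix C assume "C \<in> compsV V F"
      then obtain u where u: "u \<in> V" "C = ?c u" unfolding compsV_def by blast
      then obtain \<rho> where "\<rho> \<in> R" "conn F u \<rho>" using ex by blast
      then show "C \<in> ?c ` R" using same u by blast
    qed
    show "?c ` R \<subseteq> compsV V F" unfolding compsV_def using R by blast
  qed
  moreover have "inj_on ?c R"
  proof (rule inj_onI)
    fix \<rho> \<sigma> assume r: "\<rho> \<in> R" "\<sigma> \<in> R" "?c \<rho> = ?c \<sigma>"
    have "\<sigma> \<in> ?c \<sigma>" using r R by (auto simp: conn.crefl)
    then have "conn F \<rho> \<sigma>" using r by blast
    then show "\<rho> = \<sigma>" using sep r by blast
  qed
  ultimately show ?thesis by (simp add: card_image)
qed

lemma rooted_iff_RF: "(F, R) \<in> rooted_spanning_hyperforests n \<longleftrightarrow> F \<in> RF {1..n} R"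
proof (cases "R \<subseteq> {1..n}")
  case True
  have "(F, R) \<in> rooted_spanning_hyperforests n \<longleftrightarrow>
      (F \<subseteq> Edges {1..n} \<and> acyc F) \<and> (\<forall>C\<in>compsV {1..n} F. card (R \<inter> C) = 1)"
    unfolding rooted_spanning_hyperforests_def spanning_iff components_eq using True by simp
  also have "\<dots> \<longleftrightarrow> (F \<subseteq> Edges {1..n} \<and> acyc F) \<and>
      ((\<forall>u\<in>{1..n}. \<exists>\<rho>\<in>R. conn F u \<rho>) \<and> (\<forall>\<rho>\<in>R. \<forall>\<sigma>\<in>R. conn F \<rho> \<sigma> \<longrightarrow> \<rho> = \<sigma>))"
    by (simp only: roots_iff[OF True])
  also have "\<dots> \<longleftrightarrow> F \<in> RF {1..n} R" unfolding RF_def using True by simp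
  finally show ?thesis .
next
  case False
  then show ?thesis unfolding rooted_spanning_hyperforests_def RF_def by simp
qed

lemma rooted_char:
  "((F, R) \<in> rooted_spanning_hyperforests n \<and> card (components n F) = r) \<longleftrightarrow>
   (R \<subseteq> {1..n} \<and> card R = r \<and> F \<in> RF {1..n} R)"
proof -
  have "F \<in> RF {1..n} R \<Longrightarrow> R \<subseteq> {1..n}" unfolding RF_def by simp
  moreover have "F \<in> RF {1..n} R \<Longrightarrow> card (components n F) = card R"
    unfolding components_eq by (rule card_comps)
  ultimately show ?thesis unfolding rooted_iff_RF by auto
qed

lemma t_rooted_eq:
  "t_rooted n r w = (\<Sum>R\<in>{R. R \<subseteq> {1..n} \<and> card R = r}. \<Sum>F\<in>RF {1..n} R. hf_weight w F)"
proof -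
  let ?A = "{R. R \<subseteq> {1..n} \<and> card R = r}"
  have set: "{(F, R) \<in> rooted_spanning_hyperforests n. card (components n F) = r} = prod.swap ` (Sigma ?A (RF {1..n}))"
  proof (intro set_eqI iffI)
    fix p assume "p \<in> {(F, R) \<in> rooted_spanning_hyperforests n. card (components n F) = r}"
    then obtain F R where p: "p = (F, R)" "(F, R) \<in> rooted_spanning_hyperforests n" "card (components n F) = r" by blast
    then have "(R, F) \<in> Sigma ?A (RF {1..n})" using rooted_char by blast
    then show "p \<in> prod.swap ` (Sigma ?A (RF {1..n}))" using p by force
  next
    fix p assume "p \<in> prod.swap ` (Sigma ?A (RF {1..n}))"
    then obtain R F where p: "p = (F, R)" "(R, F) \<in> Sigma ?A (RF {1..n})" by auto
    then show "p \<in> {(F, R) \<in> rooted_spanning_hyperforests n. card (components n F) = r}"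
      using rooted_char by blast
  qed
  have fin1: "finite ?A" by simp
  have fin2: "\<forall>R\<in>?A. finite (RF {1..n} R)" using RF_finite by blast
  have "t_rooted n r w = (\<Sum>p\<in>prod.swap ` (Sigma ?A (RF {1..n})). (\<lambda>(F, R). hf_weight w F) p)"
    unfolding t_rooted_def set ..
  also have "\<dots> = (\<Sum>q\<in>Sigma ?A (RF {1..n}). hf_weight w (snd q))"
    by (subst sum.reindex) (auto simp: case_prod_beta)
  also have "\<dots> = (\<Sum>R\<in>?A. \<Sum>F\<in>RF {1..n} R. hf_weight w F)"
    using sum.Sigma[OF fin1 fin2, of "\<lambda>R F. hf_weight w F"] by (simp add: case_prod_beta)
  finally show ?thesis .
qed

lemma t_rooted_closed:
  fixes w :: "nat \<Rightarrow> 'a::field_char_0"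
  shows "t_rooted n r w = of_nat (n choose r) * closedF w n r"
proof -
  have "t_rooted n r w = (\<Sum>R\<in>{R. R \<subseteq> {1..n} \<and> card R = r}. closedF w n r)"
    unfolding t_rooted_eq
  proof (rule sum.cong[OF refl])
    fix R assume "R \<in> {R. R \<subseteq> {1..n} \<and> card R = r}"
    then show "(\<Sum>F\<in>RF {1..n} R. hf_weight w F) = closedF w n r" using f_closed[of "{1..n}" R w] by simp
  qed
  also have "\<dots> = of_nat (n choose r) * closedF w n r"
    using n_subsets[of "{1..n}" r] by simp
  finally show ?thesis .
qed

lemma unrooted_eq:
  assumes v: "v \<in> {1..n}"
  shows "RF {1..n} {v} = {F. spanning_hyperforest n F \<and> card (components n F) = 1}"
proof (intro set_eqI iffI)
  fix F assume F: "F \<in> RF {1..n} {v}"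
  have "F \<subseteq> Edges {1..n}" "acyc F" using F by (simp_all add: RF_def)
  moreover have "card (compsV {1..n} F) = 1" using card_comps[OF F] by simp
  ultimately show "F \<in> {F. spanning_hyperforest n F \<and> card (components n F) = 1}"
    by (simp add: spanning_iff components_eq)
next
  fix F assume F: "F \<in> {F. spanning_hyperforest n F \<and> card (components n F) = 1}"
  then have sp: "F \<subseteq> Edges {1..n}" "acyc F" and c: "card (compsV {1..n} F) = 1"
    unfolding spanning_iff components_eq by auto
  obtain C where C: "compsV {1..n} F = {C}" using c card_1_singletonE by blast
  have mem: "{x \<in> {1..n}. conn F u x} \<in> compsV {1..n} F" if "u \<in> {1..n}" for u
    unfolding compsV_def using that by (rule imageI)
  have ex: "conn F u v" if u: "u \<in> {1..n}" for u
  proof -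
    have "{x \<in> {1..n}. conn F u x} = C" using mem[OF u] C by simp
    moreover have "{x \<in> {1..n}. conn F v x} = C" using mem[OF v] C by simp
    moreover have "v \<in> {x \<in> {1..n}. conn F v x}" using v by (simp add: conn.crefl)
    ultimately have "v \<in> {x \<in> {1..n}. conn F u x}" by simp
    then show ?thesis by simp
  qed
  show "F \<in> RF {1..n} {v}"
    unfolding RF_def
  proof (intro CollectI conjI ballI impI)
    show "F \<subseteq> Edges {1..n}" "acyc F" by (rule sp(1), rule sp(2))
    show "{v} \<subseteq> {1..n}" using v by simp
    show "\<exists>\<rho>\<in>{v}. conn F u \<rho>" if "u \<in> {1..n}" for u using ex[OF that] by simp
    show "\<rho> = \<sigma>" if "\<rho> \<in> {v}" "\<sigma> \<in> {v}" "conn F \<rho> \<sigma>" for \<rho> \<sigma> using that by simp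
  qed
qed

lemma t_u:
  "t_rooted n 1 w = of_nat n * u_unrooted n 1 w"
proof -
  have "t_rooted n 1 w = (\<Sum>R\<in>{R. R \<subseteq> {1..n} \<and> card R = 1}. u_unrooted n 1 w)"
    unfolding t_rooted_eq
  proof (rule sum.cong[OF refl])
    fix R assume R: "R \<in> {R. R \<subseteq> {1..n} \<and> card R = 1}"
    then obtain v where v: "R = {v}" using card_1_singletonE by blast
    then have "v \<in> {1..n}" using R by blast
    note this v
    then show "(\<Sum>F\<in>RF {1..n} R. hf_weight w F) = u_unrooted n 1 w"
      unfolding u_unrooted_def using unrooted_eq by simp
  qed
  also have "\<dots> = of_nat n * u_unrooted n 1 w"
    using n_subsets[of "{1..n}" 1] by simp
  finally show ?thesis .
qed

theorem mainTheorem7: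
  fixes w :: "nat \<Rightarrow> 'a::field_char_0" and n :: nat
  assumes "1 \<le> n"
  shows "(\<forall>r. 1 \<le> r \<and> r \<le> n \<longrightarrow>
            t_rooted n r w = of_nat ((n - 1) choose (r - 1)) * P_poly (n - r) (of_nat n) w)
       \<and> t_rooted n 0 w = 0
       \<and> t_rooted n 1 w = P_poly (n - 1) (of_nat n) w
       \<and> u_unrooted n 1 w = P_poly (n - 1) (of_nat n) w / of_nat n"
proof -
  have nn: "n \<noteq> 0" using assms by simp
  have n0: "(of_nat n :: 'a) \<noteq> 0" using assms by simp
  have gen: "t_rooted n r w = of_nat ((n - 1) choose (r - 1)) * P_poly (n - r) (of_nat n) w"
    if r: "1 \<le> r" for r
  proof -
    have eq: "r * (n choose r) = n * ((n - 1) choose (r - 1))"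
      using times_binomial_minus1_eq[of r n] r by simp
    have "(of_nat r :: 'a) * of_nat (n choose r) = of_nat (r * (n choose r))" by (simp only: of_nat_mult)
    also have "\<dots> = of_nat (n * ((n - 1) choose (r - 1)))" by (simp only: eq)
    also have "\<dots> = of_nat n * of_nat ((n - 1) choose (r - 1))" by (simp only: of_nat_mult)
    finally have e2: "(of_nat r :: 'a) * of_nat (n choose r) = of_nat n * of_nat ((n - 1) choose (r - 1))" .
    have e3: "of_nat (n choose r) * (of_nat r / of_nat n) = (of_nat ((n - 1) choose (r - 1)) :: 'a)"
    proof -
      have "of_nat (n choose r) * (of_nat r / of_nat n) = ((of_nat r :: 'a) * of_nat (n choose r)) / of_nat n"
        by (simp add: mult.commute)
      also have "\<dots> = of_nat n * of_nat ((n - 1) choose (r - 1)) / of_nat n" unfolding e2 ..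
      also have "\<dots> = of_nat ((n - 1) choose (r - 1))" using n0 by simp
      finally show ?thesis .
    qed
    have "t_rooted n r w = of_nat (n choose r) * (of_nat r / of_nat n * P_poly (n - r) (of_nat n) w)"
      unfolding t_rooted_closed closedF_def using nn by simp
    also have "\<dots> = (of_nat (n choose r) * (of_nat r / of_nat n)) * P_poly (n - r) (of_nat n) w"
      by (simp only: mult.assoc)
    finally show ?thesis unfolding e3 .
  qed
  have t0: "t_rooted n 0 w = 0" unfolding t_rooted_closed closedF_def using nn by simp
  have t1: "t_rooted n 1 w = P_poly (n - 1) (of_nat n) w" using gen[of 1] by simp
  have "of_nat n * u_unrooted n 1 w = P_poly (n - 1) (of_nat n) w"
    using t_u[of n w] t1 by simp
  then have u1: "u_unrooted n 1 w = P_poly (n - 1) (of_nat n) w / of_nat n"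
    using n0 by (simp add: eq_divide_eq mult.commute)
  show ?thesis using gen t0 t1 u1 by blast
qed


end
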